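(* Let $m\ge 2$ and $1\le i<m$. For generic complex $u_1,\dots,u_m$, and in any representation of the twisted Yangian $Y^\pm(\mathfrak{gl}_N)$ in which the series $s_{ij}(u)$ act as rational operator-valued functions of $u$ (so they can be evaluated at generic complex $u$), the level-$n$ creation operator satisfies $$\mathrm{B}^{(n)}(u_1,\dots,u_m)=\mathrm{B}^{(n)}(u_1,\dots,u_{i-1},u_{i+1},u_i,u_{i+2},\dots,u_m)\,\check R^{(\hat n,\hat n)}_{\dot a_{i+1}\dot a_i}(u_i-u_{i+1})\,\check R^{(\hat n,\hat n)}_{\ddot a_{i+1}\ddot a_i}(u_{i+1}-u_i),$$ where on the right-hand side the labels $\dot a_1,\dots,\dot a_m,\ddot a_1,\dots,\ddot a_m$ are kept in their original positions (only the spectral parameters $u_i,u_{i+1}$ are interchanged), and the $\check R$-matrices act on the dual tensor factors by right multiplication.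
   Context: Fix $n\ge1$ and $N\in\{2n,2n+1\}$. The sign $\pm$ refers to the orthogonal ($+$) or symplectic ($-$) case; the symplectic case occurs only for $N=2n$. Put $\hat n:=n$ if $N=2n$ and $\hat n:=n+1$ if $N=2n+1$. For $k\in\mathbb N$ let $E^{(k)}_{ij}$ be the matrix units of $\mathrm{End}(\mathbb C^k)$, $E^{(k)}_i$ the standard basis of $\mathbb C^k$, and $(E^{(k)}_i)^*$ the dual basis. Put $P^{(k,k)}=\sum_{i,j}E^{(k)}_{ij}\otimes E^{(k)}_{ji}$, $R^{(k,k)}(u)=I-u^{-1}P^{(k,k)}$, and $\check R^{(k,k)}_{ab}(u):=\frac{u}{u-1}P^{(k,k)}_{ab}R^{(k,k)}_{ab}(u)$; subscripts indicate the tensor factors on which an operator acts. Let $f^\pm(u,v):=\frac{u-v\pm1}{u-v}$. Twisted Yangian: fix $\rho\in\mathbb C$ and write $\tilde u:=-u-\rho$. $Y^\pm(\mathfrak{gl}_N)$ is generated by $s_{ij}[r]$, $1\le i,j\le N$, $r\ge1$; put $s_{ij}(u)=\delta_{ij}+\sum_{r\ge1}s_{ij}[r]u^{-r}$. Let $\alpha(i)=i$ for $i\le\hat n$ and $\alpha(i)=i+n-\hat n$ for $i>\hat n$, and $S(u):=\sum_{i,j=1}^{2\hat n}E^{(2\hat n)}_{ij}\otimes s_{\alpha(i)\alpha(j)}(u)$ (for $N=2n+1$ the middle row and column are doubled). Let $\theta_{ij}=\theta_i\theta_j$ with $\theta_i=1$ in the orthogonal case and $\theta_i=1$ for $i>n$,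 $\theta_i=-1$ for $i\le n$ in the symplectic case; let $\hat\omega(E^{(2\hat n)}_{ij})=\theta_{ij}E^{(2\hat n)}_{\bar j\bar i}$ with $\bar i=2\hat n-i+1$, $\hat S:=\hat\omega(S)$, $\hat R:=(\mathrm{id}\otimes\hat\omega)(R^{(2\hat n,2\hat n)})$. The defining relations are $R_{12}(u-v)S_1(u)\hat R_{12}(\tilde v-u)S_2(v)=S_2(v)\hat R_{12}(\tilde v-u)S_1(u)R_{12}(u-v)$ (with $R=R^{(2\hat n,2\hat n)}$) and $\hat S(\tilde u)=S(u)\pm\frac{S(u)-S(\tilde u)}{u-\tilde u}$. Write $S(u)$ in $\hat n\times\hat n$ blocks $\begin{pmatrix}A(u)&B(u)\\C(u)&D(u)\end{pmatrix}$, so $[B(u)]_{kl}=s_{\alpha(k),\alpha(\hat n+l)}(u)$. For labels $\dot a,\ddot a$ of copies $V_{\dot a},V_{\ddot a}$ of $\mathbb C^{\hat n}$ set $$\mathrm b_{\dot a\ddot a}(u):=\sum_{k,l\le\hat n}(E^{(\hat n)}_k)^*_{\dot a}\otimes(E^{(\hat n)}_l)^*_{\ddot a}\otimes[B(u)]_{\hat n-k+1,\,l}.$$ For labels $\dot a_1,\dots,\dot a_m,\ddot a_1,\dots,\ddot a_m$ the level-$n$ creation operator is $$\mathrm B^{(n)}(u_1,\dots,u_m):=\prod_{i=m}^{1}\Big(\mathrm b_{\dot a_i\ddot a_i}(u_i)\prod_{j=i+1}^{m}\frac{R^{(\hat n,\hat n)}_{\dot a_i\ddot a_j}(\tilde u_i-u_j)}{(f^-(\tilde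 u_i,u_j))^{\delta_{\hat n n}}}\Big),$$ the outer product taken with $i$ decreasing from left to right and the inner one with $j$ increasing from left to right; the $R$-matrices act on the dual vectors by right multiplication. It takes values in $\bigotimes_i(V_{\dot a_i})^*\otimes(V_{\ddot a_i})^*\otimes(\text{operators})$. *)

theory Defs
  imports Complex_Main
begin

text \<open>Indices of all matrices/vectors are 1-based natural numbers.  A matrix on
a twofold tensor product \<open>C^k \<otimes> C^k\<close> is stored as a 4-index array:
\<open>M x x' y y'\<close> is the coefficient of \<open>E_{x x'} \<otimes> E_{y y'}\<close>.\<close>

type_synonym 'a mat4 = "nat \<Rightarrow> nat \<Rightarrow> nat \<Rightarrow> nat \<Rightarrow> 'a"

text \<open>Complex unital algebra structure on an arbitrary ring: a unital ring
homomorphism from the complex numbers into the centre.\<close>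

definition is_cscalar :: "(complex \<Rightarrow> 'a::ring_1) \<Rightarrow> bool" where
  "is_cscalar sc \<longleftrightarrow> sc 1 = 1 \<and> (\<forall>a b. sc (a + b) = sc a + sc b)
     \<and> (\<forall>a b. sc (a * b) = sc a * sc b) \<and> (\<forall>c x. sc c * x = x * sc c)"

definition hatn :: "nat \<Rightarrow> nat \<Rightarrow> nat" where
  "hatn n N = (if N = 2 * n then n else n + 1)"

definition alpha :: "nat \<Rightarrow> nat \<Rightarrow> nat \<Rightarrow> nat" where
  "alpha n N i = (if i \<le> hatn n N then i else i + n - hatn n N)"

definition theta :: "bool \<Rightarrow> nat \<Rightarrow> nat \<Rightarrow> complex" where
  "theta orth n i = (if orth then 1 else if i \<le> n then -1 else 1)"

definition bar :: "nat \<Rightarrow> nat \<Rightarrow> nat" where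
  "bar K i = K - i + 1"

definition fminus :: "complex \<Rightarrow> complex \<Rightarrow> complex" where
  "fminus u v = (u - v - 1) / (u - v)"

definition Idmat4 :: "complex mat4" where
  "Idmat4 x x' y y' = (if x = x' \<and> y = y' then 1 else 0)"

definition Pmat :: "complex mat4" where
  "Pmat x x' y y' = (if x' = y \<and> y' = x then 1 else 0)"

definition Rmat :: "complex \<Rightarrow> complex mat4" where
  "Rmat w x x' y y' = Idmat4 x x' y y' - Pmat x x' y y' / w"

text \<open>product in \<open>End(C^k) \<otimes> End(C^k) (\<otimes> A)\<close>\<close>
definition mprod4 :: "nat \<Rightarrow> ('a::semiring_0) mat4 \<Rightarrow> 'a mat4 \<Rightarrow> 'a mat4" where
  "mprod4 k M M' x x' y y' = (\<Sum>p\<in>{1..k}. \<Sum>q\<in>{1..k}. M x p y q * M' p x' q y')"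

definition Rcheck :: "nat \<Rightarrow> complex \<Rightarrow> complex mat4" where
  "Rcheck k w x x' y y' = w / (w - 1) * mprod4 k Pmat (Rmat w) x x' y y'"

definition lift4 :: "(complex \<Rightarrow> 'a) \<Rightarrow> complex mat4 \<Rightarrow> 'a mat4" where
  "lift4 sc M x x' y y' = sc (M x x' y y')"

text \<open>\<open>s i j u\<close> is the operator by which \<open>s_ij(u)\<close> acts (indices \<open>1..N\<close>).
\<open>Smat\<close> is the \<open>2 hatn \<times> 2 hatn\<close> matrix \<open>S(u)\<close> with entries \<open>s_{alpha i, alpha j}(u)\<close>.\<close>

definition Smat :: "nat \<Rightarrow> nat \<Rightarrow> (nat \<Rightarrow> nat \<Rightarrow> complex \<Rightarrow> 'a) \<Rightarrow> complex \<Rightarrow> nat \<Rightarrow> nat \<Rightarrow> 'a" where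
  "Smat n N s u i j = s (alpha n N i) (alpha n N j) u"

text \<open>\<open>omega_hat(E_ij) = theta_ij E_{bar j, bar i}\<close> applied to an operator-valued matrix.\<close>
definition omega_hat :: "(complex \<Rightarrow> 'a::ring_1) \<Rightarrow> bool \<Rightarrow> nat \<Rightarrow> nat \<Rightarrow>
    (nat \<Rightarrow> nat \<Rightarrow> 'a) \<Rightarrow> nat \<Rightarrow> nat \<Rightarrow> 'a" where
  "omega_hat sc orth n K X k l =
     sc (theta orth n (bar K l) * theta orth n (bar K k)) * X (bar K l) (bar K k)"

definition id_omega_hat :: "bool \<Rightarrow> nat \<Rightarrow> nat \<Rightarrow> complex mat4 \<Rightarrow> complex mat4" where
  "id_omega_hat orth n K M x x' y y' =
     theta orth n (bar K y') * theta orth n (bar K y) * M x x' (bar K y') (bar K y)"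

definition S1 :: "(complex \<Rightarrow> 'a::ring_1) \<Rightarrow> (nat \<Rightarrow> nat \<Rightarrow> 'a) \<Rightarrow> 'a mat4" where
  "S1 sc X x x' y y' = (if y = y' then X x x' else 0)"

definition S2 :: "(complex \<Rightarrow> 'a::ring_1) \<Rightarrow> (nat \<Rightarrow> nat \<Rightarrow> 'a) \<Rightarrow> 'a mat4" where
  "S2 sc X x x' y y' = (if x = x' then X y y' else 0)"

definition ty_rel1 :: "(complex \<Rightarrow> 'a::ring_1) \<Rightarrow> (nat \<Rightarrow> nat \<Rightarrow> complex \<Rightarrow> 'a) \<Rightarrow>
    nat \<Rightarrow> nat \<Rightarrow> bool \<Rightarrow> complex \<Rightarrow> complex \<Rightarrow> complex \<Rightarrow> bool" where
  "ty_rel1 sc s n N orth \<rho> u v \<longleftrightarrow>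
    (let K = 2 * hatn n N;
         R = lift4 sc (Rmat (u - v));
         Rh = lift4 sc (id_omega_hat orth n K (Rmat ((- v - \<rho>) - u)));
         Su = S1 sc (Smat n N s u);
         Sv = S2 sc (Smat n N s v);
         L = mprod4 K (mprod4 K (mprod4 K R Su) Rh) Sv;
         Rt = mprod4 K (mprod4 K (mprod4 K Sv Rh) Su) R
     in \<forall>x\<in>{1..K}. \<forall>x'\<in>{1..K}. \<forall>y\<in>{1..K}. \<forall>y'\<in>{1..K}. L x x' y y' = Rt x x' y y')"

definition ty_rel2 :: "(complex \<Rightarrow> 'a::ring_1) \<Rightarrow> (nat \<Rightarrow> nat \<Rightarrow> complex \<Rightarrow> 'a) \<Rightarrow>
    nat \<Rightarrow> nat \<Rightarrow> bool \<Rightarrow> complex \<Rightarrow> complex \<Rightarrow> bool" where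
  "ty_rel2 sc s n N orth \<rho> u \<longleftrightarrow>
    (let K = 2 * hatn n N; ut = - u - \<rho>; sgn = (if orth then 1 else -1 :: complex)
     in \<forall>k\<in>{1..K}. \<forall>l\<in>{1..K}.
        omega_hat sc orth n K (Smat n N s ut) k l
          = Smat n N s u k l + sc (sgn / (u - ut)) * (Smat n N s u k l - Smat n N s ut k l))"

text \<open>A representation of \<open>Y^\<pm>(gl_N)\<close> in which the \<open>s_ij(u)\<close> act as
operator-valued functions of \<open>u\<close> satisfying the defining relations for generic
arguments: away from finitely many values of \<open>u\<close>, \<open>v\<close>, \<open>u - v\<close>, \<open>u + v\<close>
(this contains the pole set of the relations for rational \<open>s_ij(u)\<close>).\<close>
definition tw_yangian_rep :: "(complex \<Rightarrow> 'a::ring_1) \<Rightarrow> (nat \<Rightarrow> nat \<Rightarrow> complex \<Rightarrow> 'a) \<Rightarrow>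
    nat \<Rightarrow> nat \<Rightarrow> bool \<Rightarrow> complex \<Rightarrow> bool" where
  "tw_yangian_rep sc s n N orth \<rho> \<longleftrightarrow>
    (\<exists>E. finite E \<and> (\<forall>u v. u \<notin> E \<longrightarrow> v \<notin> E \<longrightarrow> u - v \<notin> E \<longrightarrow> u + v \<notin> E \<longrightarrow>
          ty_rel1 sc s n N orth \<rho> u v \<and> ty_rel2 sc s n N orth \<rho> u))"

text \<open>An element of \<open>\<Otimes>_p (V_{dot a_p})^* \<otimes> (V_{ddot a_p})^* \<otimes> (operators)\<close> is
stored as its coefficient function: for an index assignment \<open>\<kappa>\<close>, where
\<open>\<kappa> (False, p)\<close> is the index in the slot \<open>dot a_p\<close> and \<open>\<kappa> (True, p)\<close> the
index in the slot \<open>ddot a_p\<close>, \<open>T \<kappa>\<close> is the operator coefficient of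
\<open>\<Otimes>_p (E_{\<kappa>(False,p)})^* \<otimes> (E_{\<kappa>(True,p)})^*\<close>.\<close>

type_synonym 'a dten = "(bool \<times> nat \<Rightarrow> nat) \<Rightarrow> 'a"

text \<open>right multiplication by \<open>b_{dot a_p, ddot a_p}(w)\<close>, where
\<open>[B(w)]_{kl} = s_{alpha k, alpha (hatn + l)}(w)\<close>\<close>
definition bmul :: "nat \<Rightarrow> nat \<Rightarrow> (nat \<Rightarrow> nat \<Rightarrow> complex \<Rightarrow> 'a::ring_1) \<Rightarrow> 'a dten \<Rightarrow>
    complex \<Rightarrow> nat \<Rightarrow> 'a dten" where
  "bmul n N s T w p \<kappa> =
     T \<kappa> * s (alpha n N (hatn n N - \<kappa> (False, p) + 1)) (alpha n N (hatn n N + \<kappa> (True, p))) w"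

text \<open>right multiplication of the dual vectors by a matrix \<open>M\<close> acting on the
tensor factors in slots \<open>a\<close> (first factor) and \<open>c\<close> (second factor):
\<open>(\<xi> M)(v) = \<xi>(M v)\<close>.\<close>
definition ract :: "(complex \<Rightarrow> 'a::ring_1) \<Rightarrow> nat \<Rightarrow> complex mat4 \<Rightarrow> bool \<times> nat \<Rightarrow>
    bool \<times> nat \<Rightarrow> 'a dten \<Rightarrow> 'a dten" where
  "ract sc k M a c T \<kappa> =
     (\<Sum>x\<in>{1..k}. \<Sum>y\<in>{1..k}. sc (M x (\<kappa> a) y (\<kappa> c)) * T (\<kappa>(a := x, c := y)))"

definition Rfac :: "nat \<Rightarrow> nat \<Rightarrow> complex \<Rightarrow> complex \<Rightarrow> complex \<Rightarrow> complex mat4" where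
  "Rfac n N \<rho> ui uj x x' y y' =
     Rmat ((- ui - \<rho>) - uj) x x' y y' / (fminus (- ui - \<rho>) uj) ^ (if hatn n N = n then 1 else 0)"

text \<open>\<open>B^(n)(u_1..u_m) = \<Prod>_{i=m}^{1} (b_i(u_i) \<Prod>_{j=i+1}^{m} R_{dot a_i, ddot a_j}(...)/f^-(...))\<close>\<close>
definition creation :: "(complex \<Rightarrow> 'a::ring_1) \<Rightarrow> (nat \<Rightarrow> nat \<Rightarrow> complex \<Rightarrow> 'a) \<Rightarrow>
    nat \<Rightarrow> nat \<Rightarrow> complex \<Rightarrow> nat \<Rightarrow> (nat \<Rightarrow> complex) \<Rightarrow> 'a dten" where
  "creation sc s n N \<rho> m u =
     foldl (\<lambda>T i. foldl (\<lambda>T' j. ract sc (hatn n N) (Rfac n N \<rho> (u i) (u j)) (False, i) (True, j) T')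
                         (bmul n N s T (u i) i) [Suc i..<Suc m])
           (\<lambda>\<kappa>. 1) (rev [1..<Suc m])"

end

theory Submission
  imports Defs
begin


locale csc = fixes sc :: "complex \<Rightarrow> 'a::ring_1" assumes cs: "is_cscalar sc"
begin
lemma sc_add: "sc (a + b) = sc a + sc b" using cs unfolding is_cscalar_def by blast
lemma sc_mult: "sc (a * b) = sc a * sc b" using cs unfolding is_cscalar_def by blast
lemma sc_one: "sc 1 = 1" using cs unfolding is_cscalar_def by blast
lemma sc_comm: "sc c * x = x * sc c" using cs unfolding is_cscalar_def by blast
lemma sc_zero: "sc 0 = 0"
  using sc_add[of 0 0] by simp
lemma sc_minus: "sc (- a) = - sc a"
  using sc_add[of a "-a"] sc_zero by (metis add.right_inverse neg_eq_iff_add_eq_0)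
lemma sc_diff: "sc (a - b) = sc a - sc b"
  using sc_add[of a "-b"] sc_minus by simp
lemma sc_comm2: "sc c * (sc d * x) = sc d * (sc c * x)"
  by (metis mult.assoc sc_mult mult.commute)
end

definition swp :: "bool \<times> nat \<Rightarrow> bool \<times> nat \<Rightarrow> (bool \<times> nat \<Rightarrow> nat) \<Rightarrow> (bool \<times> nat \<Rightarrow> nat)" where
  "swp a c \<kappa> = \<kappa>(a := \<kappa> c, c := \<kappa> a)"

lemma swp_sym: "swp a c = swp c a"
  by (rule ext) (auto simp: swp_def fun_eq_iff)

lemma swp_swp_same[simp]: "swp a c (swp a c \<kappa>) = \<kappa>"
  by (auto simp: swp_def fun_eq_iff)

lemma swp_swp_disj: "a \<noteq> a' \<Longrightarrow> a \<noteq> c' \<Longrightarrow> c \<noteq> a' \<Longrightarrow> c \<noteq> c' \<Longrightarrow>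
   swp a c (swp a' c' \<kappa>) = swp a' c' (swp a c \<kappa>)"
  by (auto simp: swp_def fun_eq_iff)

definition Lop :: "(complex \<Rightarrow> 'a::ring_1) \<Rightarrow> complex \<Rightarrow> complex \<Rightarrow> bool \<times> nat \<Rightarrow> bool \<times> nat \<Rightarrow> 'a dten \<Rightarrow> 'a dten" where
  "Lop sc al be a c T = (\<lambda>\<kappa>. sc al * T \<kappa> + sc be * T (swp a c \<kappa>))"

lemma Lop_sym: "Lop sc al be a c = Lop sc al be c a"
  unfolding Lop_def by (subst swp_sym) simp

context csc begin
lemma Lop_comm: "a \<noteq> a' \<Longrightarrow> a \<noteq> c' \<Longrightarrow> c \<noteq> a' \<Longrightarrow> c \<noteq> c' \<Longrightarrow>
  Lop sc al be a c (Lop sc al' be' a' c' T) = Lop sc al' be' a' c' (Lop sc al be a c T)"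
  unfolding Lop_def
  by (rule ext) (simp add: distrib_left swp_swp_disj sc_comm2 algebra_simps)
end

definition G6 :: "(complex \<Rightarrow> 'a::ring_1) \<Rightarrow> bool \<times> nat \<Rightarrow> bool \<times> nat \<Rightarrow> bool \<times> nat \<Rightarrow>
   complex \<Rightarrow> complex \<Rightarrow> complex \<Rightarrow> complex \<Rightarrow> complex \<Rightarrow> complex \<Rightarrow> 'a dten \<Rightarrow> 'a dten" where
  "G6 sc a b c c0 c1 c2 c3 c4 c5 T = (\<lambda>\<kappa>. sc c0 * T \<kappa> + sc c1 * T (swp a b \<kappa>) + sc c2 * T (swp b c \<kappa>)
     + sc c3 * T (swp a c \<kappa>) + sc c4 * T (swp a b (swp b c \<kappa>)) + sc c5 * T (swp b c (swp a b \<kappa>)))"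

context csc begin

lemma G6_id: "G6 sc a b c 1 0 0 0 0 0 T = T"
  by (simp add: G6_def sc_one sc_zero)

lemma G6_eq: "c0 = d0 \<Longrightarrow> c1 = d1 \<Longrightarrow> c2 = d2 \<Longrightarrow> c3 = d3 \<Longrightarrow> c4 = d4 \<Longrightarrow> c5 = d5 \<Longrightarrow>
  G6 sc a b c c0 c1 c2 c3 c4 c5 T = G6 sc a b c d0 d1 d2 d3 d4 d5 T" by simp

context fixes a b c :: "bool \<times> nat" assumes d: "a \<noteq> b" "a \<noteq> c" "b \<noteq> c"
begin
lemma pab: "swp a b (swp a b k) = k"
  "swp a c (swp a b k) = swp a b (swp b c k)"
  "swp a b (swp b c (swp a b k)) = swp a c k"
  "swp b c (swp a b (swp a b k)) = swp b c k"
  using d by (auto simp: swp_def fun_eq_iff)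
lemma pac: "swp a b (swp a c k) = swp b c (swp a b k)"
  "swp b c (swp a c k) = swp a b (swp b c k)"
  "swp a c (swp a c k) = k"
  "swp a b (swp b c (swp a c k)) = swp b c k"
  "swp b c (swp a b (swp a c k)) = swp a b k"
  using d by (auto simp: swp_def fun_eq_iff)
lemma pbc: "swp b c (swp b c k) = k"
  "swp a c (swp b c k) = swp b c (swp a b k)"
  "swp a b (swp b c (swp b c k)) = swp a b k"
  "swp b c (swp a b (swp b c k)) = swp a c k"
  using d by (auto simp: swp_def fun_eq_iff)

lemma Lop_G6_ab: "Lop sc al be a b (G6 sc a b c c0 c1 c2 c3 c4 c5 T) =
   G6 sc a b c (al*c0+be*c1) (al*c1+be*c0) (al*c2+be*c5) (al*c3+be*c4) (al*c4+be*c3) (al*c5+be*c2) T"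
  unfolding G6_def Lop_def
  by (rule ext) (simp add: pab sc_add sc_mult distrib_left distrib_right mult.assoc add_ac)
lemma Lop_G6_ac: "Lop sc al be a c (G6 sc a b c c0 c1 c2 c3 c4 c5 T) =
   G6 sc a b c (al*c0+be*c3) (al*c1+be*c5) (al*c2+be*c4) (al*c3+be*c0) (al*c4+be*c2) (al*c5+be*c1) T"
  unfolding G6_def Lop_def
  by (rule ext) (simp add: pac sc_add sc_mult distrib_left distrib_right mult.assoc add_ac)
lemma Lop_G6_bc: "Lop sc al be b c (G6 sc a b c c0 c1 c2 c3 c4 c5 T) =
   G6 sc a b c (al*c0+be*c2) (al*c1+be*c4) (al*c2+be*c0) (al*c3+be*c5) (al*c4+be*c1) (al*c5+be*c3) T"
  unfolding G6_def Lop_def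
  by (rule ext) (simp add: pbc sc_add sc_mult distrib_left distrib_right mult.assoc add_ac)

lemma ybe2:
  assumes "w1 \<noteq> 0" "w2 \<noteq> 0" "r = w2 - w1" "r \<noteq> 1"
  shows "Lop sc g1 (-g1/w1) a c (Lop sc g2 (-g2/w2) a b (Lop sc (-1/(r-1)) (r/(r-1)) b c T))
       = Lop sc (-1/(r-1)) (r/(r-1)) b c (Lop sc g2 (-g2/w2) a c (Lop sc g1 (-g1/w1) a b T))"
proof -
  have e: "T = G6 sc a b c 1 0 0 0 0 0 T" by (simp add: G6_id)
  have "r - 1 \<noteq> 0" using assms by simp
  show ?thesis
    apply (subst (1 2) e)
    apply (simp only: Lop_G6_ab Lop_G6_ac Lop_G6_bc)
    apply (rule G6_eq)
    using assms \<open>r - 1 \<noteq> 0\<close> apply (simp_all add: divide_simps) apply (simp_all add: algebra_simps)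
    done
qed

lemma ybe1:
  assumes "w1 \<noteq> 0" "w2 \<noteq> 0" "r = w1 - w2" "r \<noteq> 1"
  shows "Lop sc (-1/(r-1)) (r/(r-1)) a b (Lop sc g1 (-g1/w1) a c (Lop sc g2 (-g2/w2) b c T))
       = Lop sc g2 (-g2/w2) a c (Lop sc g1 (-g1/w1) b c (Lop sc (-1/(r-1)) (r/(r-1)) a b T))"
proof -
  have e: "T = G6 sc a b c 1 0 0 0 0 0 T" by (simp add: G6_id)
  have "r - 1 \<noteq> 0" using assms by simp
  show ?thesis
    apply (subst (1 2) e)
    apply (simp only: Lop_G6_ab Lop_G6_ac Lop_G6_bc)
    apply (rule G6_eq)
    using assms \<open>r - 1 \<noteq> 0\<close> apply (simp_all add: divide_simps) apply (simp_all add: algebra_simps)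
    done
qed
end
end



lemma theta_sq[simp]: "theta orth n j * theta orth n j = 1"
  by (simp add: theta_def)

lemma bar_inj: "y \<in> {1..K} \<Longrightarrow> q \<in> {1..K} \<Longrightarrow> (bar K y = bar K q) = (y = q)"
  by (auto simp: bar_def)
lemma bar_bar[simp]: "q \<in> {1..K} \<Longrightarrow> bar K (bar K q) = q"
  by (auto simp: bar_def)
lemma bar_rng: "q \<in> {1..K} \<Longrightarrow> bar K q \<in> {1..K}"
  by (auto simp: bar_def)

lemma mult_if0: "(a::'a::semiring_0) * (if P then b else 0) = (if P then a * b else 0)" by simp
lemma if_conj0: "(if P \<and> Q then b else 0) = (if P then (if Q then b else 0) else (0::'a::zero))" by simp
lemma mult_if1: "(a::'a::semiring_1) * (if P then 1 else 0) = (if P then a else 0)" by simp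
lemma sum_if0: "(\<Sum>q\<in>S. if P then f q else 0) = (if P then (\<Sum>q\<in>S. f q) else (0::'a::comm_monoid_add))" by simp
lemma if0_mult: "(if P then b else 0) * (a::'a::semiring_0) = (if P then b * a else 0)" by simp

context csc begin
lemma Rmat_if: "Rmat a x x' y y' = (if x = x' \<and> y = y' then 1 else 0) - (if x' = y \<and> y' = x then 1/a else 0)"
  by (simp add: Rmat_def Idmat4_def Pmat_def)
lemma sc_if1: "sc (if A then 1 else 0) = (if A then 1 else 0)" by (simp add: sc_one sc_zero)
lemma sc_if2: "sc ((if A then 1 else 0) / a) = (if A then sc (1/a) else 0)" by (simp add: sc_zero)

lemma ML1: "y' \<in> {1..K} \<Longrightarrow> mprod4 K M (S1 sc X) x x' y y' = (\<Sum>p\<in>{1..K}. M x p y y' * X p x')"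
  unfolding mprod4_def S1_def
proof (intro sum.cong refl)
  fix p assume "y' \<in> {1..K}"
  then show "(\<Sum>q\<in>{1..K}. M x p y q * (if q = y' then X p x' else 0)) = M x p y y' * X p x'"
    by (simp add: mult_if0 sum.delta')
qed
lemma ML2: "x' \<in> {1..K} \<Longrightarrow> mprod4 K M (S2 sc X) x x' y y' = (\<Sum>q\<in>{1..K}. M x x' y q * X q y')"
  unfolding mprod4_def S2_def by (simp add: mult_if0 sum_if0 sum.delta cong: if_cong)

lemma ML4: "x \<in> {1..K} \<Longrightarrow> mprod4 K (S2 sc X) M x x' y y' = (\<Sum>q\<in>{1..K}. X y q * M x x' q y')"
  unfolding mprod4_def S2_def by (simp add: if0_mult sum_if0 sum.delta cong: if_cong)

lemma sc_if: "sc (if A then c else 0) = (if A then sc c else 0)" by (simp add: sc_zero)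

lemma MR: "x' \<in> {1..K} \<Longrightarrow> y' \<in> {1..K} \<Longrightarrow>
  mprod4 K M (lift4 sc (Rmat a)) x x' y y' = M x x' y y' - M x y' y x' * sc (1/a)"
proof -
  assume h: "x' \<in> {1..K}" "y' \<in> {1..K}"
  have "mprod4 K M (lift4 sc (Rmat a)) x x' y y' =
     (\<Sum>p\<in>{1..K}. \<Sum>q\<in>{1..K}. (if p = x' \<and> q = y' then M x p y q else 0)
        - (if x' = q \<and> y' = p then M x p y q * sc (1/a) else 0))"
    unfolding mprod4_def lift4_def Rmat_def Idmat4_def Pmat_def
    by (simp add: sc_diff sc_if1 sc_if2 right_diff_distrib mult_if1 mult_if0 cong: if_cong)
  also have "\<dots> = M x x' y y' - M x y' y x' * sc (1/a)"
    using h by (simp add: sum_subtractf if_conj0 sum_if0 sum.delta sum.delta')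
  finally show ?thesis .
qed

lemma MH: "x' \<in> {1..K} \<Longrightarrow> y' \<in> {1..K} \<Longrightarrow>
  mprod4 K M (lift4 sc (id_omega_hat orth n K (Rmat w))) x x' y y' = M x x' y y'
   - (if x' = bar K y' then (\<Sum>q\<in>{1..K}. M x (bar K q) y q * sc (theta orth n x' * theta orth n (bar K q) / w)) else 0)"
proof -
  assume h: "x' \<in> {1..K}" "y' \<in> {1..K}"
  have "mprod4 K M (lift4 sc (id_omega_hat orth n K (Rmat w))) x x' y y' =
     (\<Sum>p\<in>{1..K}. \<Sum>q\<in>{1..K}. (if p = x' \<and> q = y' then M x p y q else 0)
        - (if x' = bar K y' \<and> p = bar K q then M x p y q * sc (theta orth n x' * theta orth n (bar K q) / w) else 0))"
    unfolding mprod4_def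
  proof (intro sum.cong refl)
    fix p q assume q: "q \<in> {1..K}"
    show "M x p y q * lift4 sc (id_omega_hat orth n K (Rmat w)) p x' q y' =
      (if p = x' \<and> q = y' then M x p y q else 0) -
      (if x' = bar K y' \<and> p = bar K q then M x p y q * sc (theta orth n x' * theta orth n (bar K q) / w) else 0)"
      using bar_inj[OF h(2) q] unfolding lift4_def id_omega_hat_def Rmat_def Idmat4_def Pmat_def
      by (cases "p = x'"; cases "q = y'"; cases "x' = bar K y'"; cases "p = bar K q";
          simp add: sc_one sc_zero sc_diff sc_minus right_diff_distrib eq_commute[of "bar K q"])
  qed
  also have "\<dots> = M x x' y y'
   - (if x' = bar K y' then (\<Sum>q\<in>{1..K}. M x (bar K q) y q * sc (theta orth n x' * theta orth n (bar K q) / w)) else 0)"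
  proof -
    let ?G = "\<lambda>p q. M x p y q * sc (theta orth n x' * theta orth n (bar K q) / w)"
    have s1: "(\<Sum>p\<in>{1..K}. \<Sum>q\<in>{1..K}. (if p = x' \<and> q = y' then M x p y q else 0)) = M x x' y y'"
      using h by (simp add: if_conj0 sum_if0 sum.delta cong: if_cong)
    have "(\<Sum>p\<in>{1..K}. \<Sum>q\<in>{1..K}. (if p = bar K q then ?G p q else 0))
        = (\<Sum>q\<in>{1..K}. \<Sum>p\<in>{1..K}. (if p = bar K q then ?G p q else 0))"
      by (rule sum.swap)
    also have "\<dots> = (\<Sum>q\<in>{1..K}. ?G (bar K q) q)"
      by (rule sum.cong) (auto simp: sum.delta bar_def)
    finally have s2a: "(\<Sum>p\<in>{1..K}. \<Sum>q\<in>{1..K}. (if p = bar K q then ?G p q else 0))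
        = (\<Sum>q\<in>{1..K}. ?G (bar K q) q)" .
    have s2: "(\<Sum>p\<in>{1..K}. \<Sum>q\<in>{1..K}. (if x' = bar K y' \<and> p = bar K q then ?G p q else 0))
        = (if x' = bar K y' then (\<Sum>q\<in>{1..K}. ?G (bar K q) q) else 0)"
      by (simp only: if_conj0 sum_if0 s2a)
    show ?thesis by (simp only: sum_subtractf s1 s2)
  qed
  finally show ?thesis .
qed

lemma RS1: "x \<in> {1..K} \<Longrightarrow> y \<in> {1..K} \<Longrightarrow> q \<in> {1..K} \<Longrightarrow>
  mprod4 K (lift4 sc (Rmat a)) (S1 sc X) x p y q = (if y = q then X x p else 0) - sc (1/a) * (if x = q then X y p else 0)"
  apply (simp add: ML1)
  apply (simp add: lift4_def Rmat_if sc_diff sc_if sc_one sc_zero sc_minus left_diff_distrib sum_subtractf sum_negf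
      if0_mult if_conj0 sum_if0 sum.delta sum.delta' cong: if_cong)
  done

lemma L_eval: assumes h: "x \<in> {1..K}" "x' \<in> {1..K}" "y \<in> {1..K}" "y' \<in> {1..K}"
  shows "mprod4 K (mprod4 K (mprod4 K (lift4 sc (Rmat a)) (S1 sc X)) (lift4 sc (id_omega_hat orth n K (Rmat w)))) (S2 sc Y) x x' y y' =
  (X x x' * Y y y' - sc (1/a) * X y x' * Y x y')
   - (X x (bar K y) * sc (theta orth n x' * theta orth n (bar K y) / w)
       - sc (1/a) * (X y (bar K x) * sc (theta orth n x' * theta orth n (bar K x) / w))) * Y (bar K x') y'"
proof -
  let ?RS = "mprod4 K (lift4 sc (Rmat a)) (S1 sc X)"
  let ?C = "X x (bar K y) * sc (theta orth n x' * theta orth n (bar K y) / w)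
       - sc (1/a) * (X y (bar K x) * sc (theta orth n x' * theta orth n (bar K x) / w))"
  have C: "(\<Sum>q\<in>{1..K}. ?RS x (bar K q) y q * sc (theta orth n x' * theta orth n (bar K q) / w)) = ?C"
  proof -
    have "(\<Sum>q\<in>{1..K}. ?RS x (bar K q) y q * sc (theta orth n x' * theta orth n (bar K q) / w))
      = (\<Sum>q\<in>{1..K}. (if y = q then X x (bar K q) * sc (theta orth n x' * theta orth n (bar K q) / w) else 0)
          - sc (1/a) * (if x = q then X y (bar K q) * sc (theta orth n x' * theta orth n (bar K q) / w) else 0))"
      using h by (intro sum.cong refl) (simp add: RS1 left_diff_distrib mult.assoc)
    also have "\<dots> = ?C" using h by (simp add: sum_subtractf sum_distrib_left[symmetric] sum.delta)
    finally show ?thesis .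
  qed
  have "mprod4 K (mprod4 K ?RS (lift4 sc (id_omega_hat orth n K (Rmat w)))) (S2 sc Y) x x' y y'
     = (\<Sum>r\<in>{1..K}. (?RS x x' y r - (if x' = bar K r then ?C else 0)) * Y r y')"
    unfolding ML2[OF h(2)]
  proof (intro sum.cong refl)
    fix r assume r: "r \<in> {1..K}"
    show "mprod4 K ?RS (lift4 sc (id_omega_hat orth n K (Rmat w))) x x' y r * Y r y' =
         (?RS x x' y r - (if x' = bar K r then ?C else 0)) * Y r y'"
      unfolding MH[OF h(2) r] C ..
  qed
  also have "\<dots> = (\<Sum>r\<in>{1..K}. ((if y = r then X x x' * Y r y' else 0) - sc (1/a) * (if x = r then X y x' * Y r y' else 0))
        - (if r = bar K x' then ?C * Y r y' else 0))"
    using h by (intro sum.cong refl) (auto simp: RS1 left_diff_distrib mult.assoc)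
  also have "\<dots> = (X x x' * Y y y' - sc (1/a) * X y x' * Y x y') - ?C * Y (bar K x') y'"
    using h bar_rng[OF h(2)] by (simp add: sum_subtractf sum_distrib_left[symmetric] sum.delta sum.delta' mult.assoc)
  finally show ?thesis .
qed

lemma bar_eq_swap: "x \<in> {1..K} \<Longrightarrow> q \<in> {1..K} \<Longrightarrow> (x = bar K q) = (q = bar K x)"
  by (auto simp: bar_def)

lemma V_eval: assumes h: "x \<in> {1..K}" "t \<in> {1..K}" "q \<in> {1..K}"
  shows "mprod4 K (S2 sc Y) (lift4 sc (id_omega_hat orth n K (Rmat w))) x t y q =
    (if x = t then Y y q else 0) - (if t = bar K q then Y y (bar K x) * sc (theta orth n t * theta orth n x / w) else 0)"
proof -
  have "(\<Sum>q2\<in>{1..K}. S2 sc Y x (bar K q2) y q2 * sc (theta orth n t * theta orth n (bar K q2) / w))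
     = (\<Sum>q2\<in>{1..K}. if q2 = bar K x then Y y q2 * sc (theta orth n t * theta orth n (bar K q2) / w) else 0)"
    by (intro sum.cong refl) (simp add: S2_def bar_eq_swap[OF h(1)])
  also have "\<dots> = Y y (bar K x) * sc (theta orth n t * theta orth n x / w)"
    using h bar_rng[OF h(1)] by (simp add: sum.delta')
  finally have e: "(\<Sum>q2\<in>{1..K}. S2 sc Y x (bar K q2) y q2 * sc (theta orth n t * theta orth n (bar K q2) / w))
     = Y y (bar K x) * sc (theta orth n t * theta orth n x / w)" .
  show ?thesis unfolding MH[OF h(2,3)] e by (simp add: S2_def)
qed

lemma Rt_eval: assumes h: "x \<in> {1..K}" "x' \<in> {1..K}" "y \<in> {1..K}" "y' \<in> {1..K}"
  shows "mprod4 K (mprod4 K (mprod4 K (S2 sc Y) (lift4 sc (id_omega_hat orth n K (Rmat w)))) (S1 sc X)) (lift4 sc (Rmat a)) x x' y y' =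
   (Y y y' * X x x' - Y y (bar K x) * sc (theta orth n (bar K y') * theta orth n x / w) * X (bar K y') x')
   - (Y y x' * X x y' - Y y (bar K x) * sc (theta orth n (bar K x') * theta orth n x / w) * X (bar K x') y') * sc (1/a)"
proof -
  let ?V = "mprod4 K (S2 sc Y) (lift4 sc (id_omega_hat orth n K (Rmat w)))"
  have W: "mprod4 K ?V (S1 sc X) x p y q = Y y q * X x p - Y y (bar K x) * sc (theta orth n (bar K q) * theta orth n x / w) * X (bar K q) p"
    if q: "q \<in> {1..K}" for p q
  proof -
    have "mprod4 K ?V (S1 sc X) x p y q = (\<Sum>t\<in>{1..K}. ((if x = t then Y y q else 0)
       - (if t = bar K q then Y y (bar K x) * sc (theta orth n t * theta orth n x / w) else 0)) * X t p)"
      unfolding ML1[OF q]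
    proof (intro sum.cong refl)
      fix t assume t: "t \<in> {1..K}"
      show "?V x t y q * X t p = ((if x = t then Y y q else 0)
       - (if t = bar K q then Y y (bar K x) * sc (theta orth n t * theta orth n x / w) else 0)) * X t p"
        by (simp only: V_eval[OF h(1) t q])
    qed
    also have "\<dots> = Y y q * X x p - Y y (bar K x) * sc (theta orth n (bar K q) * theta orth n x / w) * X (bar K q) p"
      using h bar_rng[OF q] by (simp add: left_diff_distrib sum_subtractf if0_mult sum.delta sum.delta' cong: if_cong)
    finally show ?thesis .
  qed
  show ?thesis unfolding MR[OF h(2,4)] W[OF h(4)] W[OF h(2)] ..
qed

end

lemma theta_top: "orth \<or> hatn n N = n \<Longrightarrow> j \<le> hatn n N \<Longrightarrow> theta orth n j = (if orth then 1 else -1)"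
  by (auto simp: theta_def)
lemma theta_bot: "orth \<or> hatn n N = n \<Longrightarrow> hatn n N < j \<Longrightarrow> theta orth n j = 1"
  by (auto simp: theta_def)

context csc begin

lemma BB_S:
  assumes rel: "ty_rel1 sc s n N orth \<rho> u v" and th: "orth \<or> hatn n N = n" and hh: "h = hatn n N"
    and x: "x \<in> {1..h}" and y: "y \<in> {1..h}" and x': "x' \<in> {h+1..2*h}" and y': "y' \<in> {h+1..2*h}"
  shows "(Smat n N s u x x' * Smat n N s v y y' - sc (1/(u-v)) * Smat n N s u y x' * Smat n N s v x y')
   - (Smat n N s u x (bar (2*h) y) * sc (1/((- v - \<rho>) - u))
       - sc (1/(u-v)) * (Smat n N s u y (bar (2*h) x) * sc (1/((- v - \<rho>) - u)))) * Smat n N s v (bar (2*h) x') y'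
   = (Smat n N s v y y' * Smat n N s u x x' - Smat n N s v y (bar (2*h) x) * sc (1/((- v - \<rho>) - u)) * Smat n N s u (bar (2*h) y') x')
   - (Smat n N s v y x' * Smat n N s u x y' - Smat n N s v y (bar (2*h) x) * sc (1/((- v - \<rho>) - u)) * Smat n N s u (bar (2*h) x') y') * sc (1/(u-v))"
proof -
  let ?K = "2*h"
  have r: "x \<in> {1..?K}" "x' \<in> {1..?K}" "y \<in> {1..?K}" "y' \<in> {1..?K}" using x y x' y' by auto
  have eq: "mprod4 ?K (mprod4 ?K (mprod4 ?K (lift4 sc (Rmat (u-v))) (S1 sc (Smat n N s u))) (lift4 sc (id_omega_hat orth n ?K (Rmat ((- v - \<rho>) - u))))) (S2 sc (Smat n N s v)) x x' y y'
    = mprod4 ?K (mprod4 ?K (mprod4 ?K (S2 sc (Smat n N s v)) (lift4 sc (id_omega_hat orth n ?K (Rmat ((- v - \<rho>) - u))))) (S1 sc (Smat n N s u))) (lift4 sc (Rmat (u-v))) x x' y y'"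
    using rel r unfolding ty_rel1_def Let_def hh by blast
  have t1: "theta orth n x' * theta orth n (bar ?K y) = 1" "theta orth n x' * theta orth n (bar ?K x) = 1"
    "theta orth n (bar ?K y') * theta orth n x = 1" "theta orth n (bar ?K x') * theta orth n x = 1"
    using x y x' y' th theta_top[OF th] theta_bot[OF th] unfolding hh[symmetric] bar_def by auto
  show ?thesis using eq unfolding L_eval[OF r] Rt_eval[OF r] t1 by simp
qed

end

definition bb :: "nat \<Rightarrow> nat \<Rightarrow> (nat \<Rightarrow> nat \<Rightarrow> complex \<Rightarrow> 'a) \<Rightarrow> complex \<Rightarrow> nat \<Rightarrow> nat \<Rightarrow> 'a" where
  "bb n N s w k l = Smat n N s w (hatn n N - k + 1) (hatn n N + l)"

lemma bmul_bb: "bmul n N s T w p \<kappa> = T \<kappa> * bb n N s w (\<kappa> (False, p)) (\<kappa> (True, p))"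
  by (simp add: bmul_def bb_def Smat_def)

context csc begin

lemma BB_b:
  assumes rel: "ty_rel1 sc s n N orth \<rho> u v" and th: "orth \<or> hatn n N = n"
    and k: "k1 \<in> {1..hatn n N}" "l1 \<in> {1..hatn n N}" "k2 \<in> {1..hatn n N}" "l2 \<in> {1..hatn n N}"
  shows "bb n N s u k1 l1 * bb n N s v k2 l2 - sc (1/(u-v)) * bb n N s u k2 l1 * bb n N s v k1 l2
   - (bb n N s u k1 k2 * sc (1/((- v - \<rho>) - u)) - sc (1/(u-v)) * (bb n N s u k2 k1 * sc (1/((- v - \<rho>) - u)))) * bb n N s v l1 l2
   = bb n N s v k2 l2 * bb n N s u k1 l1 - bb n N s v k2 k1 * sc (1/((- v - \<rho>) - u)) * bb n N s u l2 l1
   - (bb n N s v k2 l1 * bb n N s u k1 l2 - bb n N s v k2 k1 * sc (1/((- v - \<rho>) - u)) * bb n N s u l1 l2) * sc (1/(u-v))"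
proof -
  define h where "h = hatn n N"
  have i1: "hatn n N - k1 + 1 \<in> {1..h}" "hatn n N - k2 + 1 \<in> {1..h}" "hatn n N + l1 \<in> {h+1..2*h}" "hatn n N + l2 \<in> {h+1..2*h}"
    using k by (auto simp: h_def)
  have i2: "bar (2*h) (hatn n N - k2 + 1) = hatn n N + k2" "bar (2*h) (hatn n N - k1 + 1) = hatn n N + k1"
     "bar (2*h) (hatn n N + l1) = hatn n N - l1 + 1" "bar (2*h) (hatn n N + l2) = hatn n N - l2 + 1"
    using k by (auto simp: h_def bar_def)
  show ?thesis using BB_S[OF rel th h_def i1(1) i1(2) i1(3) i1(4)] unfolding i2 bb_def .
qed

lemma E1_alg:
  fixes x0 u11 v22 v21 ul2l1 v2l1 u1l2 ul1l2 u12 vl1l2 u2l1 v1l2 u21 :: 'a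
  assumes BB: "u11 * v22 - sc (1/a) * u2l1 * v1l2 - (u12 * sc (1/c) - sc (1/a) * (u21 * sc (1/c))) * vl1l2
     = v22 * u11 - v21 * sc (1/c) * ul2l1 - (v2l1 * u1l2 - v21 * sc (1/c) * ul1l2) * sc (1/a)"
  shows "(sc g * (x0 * v22 * u11) + sc (-g/c) * (x0 * v21 * ul2l1))
      - sc (1/a) * (sc g * (x0 * v2l1 * u1l2) + sc (-g/c) * (x0 * v21 * ul1l2))
    = (sc g * (x0 * u11 * v22) + sc (-g/c) * (x0 * u12 * vl1l2))
      - sc (1/a) * (sc g * (x0 * u2l1 * v1l2) + sc (-g/c) * (x0 * u21 * vl1l2))"
proof -
  have m: "-g/c = - (g * (1/c))" by simp
  have cm: "\<And>z d y. z * (sc d * y) = sc d * (z * y)" "\<And>z d. z * sc d = sc d * z"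
    by (metis mult.assoc sc_comm) (simp add: sc_comm)
  have e1: "(sc g * (x0 * v22 * u11) + sc (-g/c) * (x0 * v21 * ul2l1))
      - sc (1/a) * (sc g * (x0 * v2l1 * u1l2) + sc (-g/c) * (x0 * v21 * ul1l2))
      = sc g * (x0 * (v22 * u11 - v21 * sc (1/c) * ul2l1 - (v2l1 * u1l2 - v21 * sc (1/c) * ul1l2) * sc (1/a)))"
    unfolding m sc_minus sc_mult by (simp add: algebra_simps cm(1)[of x0] cm(2)[of x0] cm(1)[of u11] cm(2)[of u11] cm(1)[of v22] cm(2)[of v22] cm(1)[of v21] cm(2)[of v21] cm(1)[of ul2l1] cm(2)[of ul2l1] cm(1)[of v2l1] cm(2)[of v2l1] cm(1)[of u1l2] cm(2)[of u1l2] cm(1)[of ul1l2] cm(2)[of ul1l2] cm(1)[of u12] cm(2)[of u12] cm(1)[of vl1l2] cm(2)[of vl1l2] cm(1)[of u2l1] cm(2)[of u2l1] cm(1)[of v1l2] cm(2)[of v1l2] cm(1)[of u21] cm(2)[of u21] sc_comm2)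
  have e2: "(sc g * (x0 * u11 * v22) + sc (-g/c) * (x0 * u12 * vl1l2))
      - sc (1/a) * (sc g * (x0 * u2l1 * v1l2) + sc (-g/c) * (x0 * u21 * vl1l2))
      = sc g * (x0 * (u11 * v22 - sc (1/a) * u2l1 * v1l2 - (u12 * sc (1/c) - sc (1/a) * (u21 * sc (1/c))) * vl1l2))"
    unfolding m sc_minus sc_mult by (simp add: algebra_simps cm(1)[of x0] cm(2)[of x0] cm(1)[of u11] cm(2)[of u11] cm(1)[of v22] cm(2)[of v22] cm(1)[of v21] cm(2)[of v21] cm(1)[of ul2l1] cm(2)[of ul2l1] cm(1)[of v2l1] cm(2)[of v2l1] cm(1)[of u1l2] cm(2)[of u1l2] cm(1)[of ul1l2] cm(2)[of ul1l2] cm(1)[of u12] cm(2)[of u12] cm(1)[of vl1l2] cm(2)[of vl1l2] cm(1)[of u2l1] cm(2)[of u2l1] cm(1)[of v1l2] cm(2)[of v1l2] cm(1)[of u21] cm(2)[of u21] sc_comm2)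
  show ?thesis unfolding e1 e2 BB ..
qed

lemma fin_alg:
  fixes C0 C1 D0 DF DT DFT :: 'a
  assumes a: "a \<noteq> 0" "a \<noteq> 1" "a \<noteq> -1"
    and E1: "C0 - sc (1/a) * C1 = DFT - sc (1/a) * DT"
    and E2: "C1 - sc (1/a) * C0 = DF - sc (1/a) * D0"
  shows "C0 = sc (-1/(-a-1)) * (sc (-1/(a-1)) * D0 + sc (a/(a-1)) * DF)
            + sc (-a/(-a-1)) * (sc (-1/(a-1)) * DT + sc (a/(a-1)) * DFT)"
proof -
  define A where "A = a*a/(a*a-1)"
  define B where "B = a/(a*a-1)"
  have aa: "a*a - 1 \<noteq> 0"
  proof
    assume "a*a - 1 = 0"
    hence "(a-1)*(a+1) = 0" by (simp add: algebra_simps)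
    thus False using a by (simp add: eq_neg_iff_add_eq_0[symmetric])
  qed
  have Ba: "B * (1/a) = 1/(a*a-1)" "A * (1/a) = a/(a*a-1)" using a by (simp_all add: A_def B_def)
  have cA: "A - B * (1/a) = 1" "B - A * (1/a) = 0" unfolding Ba using aa
    by (simp_all add: A_def B_def diff_divide_distrib[symmetric])
  have "sc A * (C0 - sc (1/a) * C1) + sc B * (C1 - sc (1/a) * C0) = sc (A - B * (1/a)) * C0 + sc (B - A * (1/a)) * C1"
  proof -
    have d: "sc (A / a) = sc A * sc (1/a)" "sc (B / a) = sc B * sc (1/a)" by (simp_all add: sc_mult[symmetric])
    show ?thesis by (simp add: sc_diff sc_mult algebra_simps sc_comm2 d)
  qed
  hence C0: "C0 = sc A * (DFT - sc (1/a) * DT) + sc B * (DF - sc (1/a) * D0)"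
    unfolding cA sc_one sc_zero E1 E2 by simp
  have q: "-1/(-a-1) * (-1/(a-1)) = - (B * (1/a))" "-1/(-a-1) * (a/(a-1)) = B"
     "-a/(-a-1) * (-1/(a-1)) = - (A * (1/a))" "-a/(-a-1) * (a/(a-1)) = A"
    using a aa by (simp_all add: A_def B_def field_simps)
  have "sc (-1/(-a-1)) * (sc (-1/(a-1)) * D0 + sc (a/(a-1)) * DF)
            + sc (-a/(-a-1)) * (sc (-1/(a-1)) * DT + sc (a/(a-1)) * DFT)
     = sc (-1/(-a-1) * (-1/(a-1))) * D0 + sc (-1/(-a-1) * (a/(a-1))) * DF
       + sc (-a/(-a-1) * (-1/(a-1))) * DT + sc (-a/(-a-1) * (a/(a-1))) * DFT"
    by (simp only: sc_mult distrib_left mult.assoc add.assoc)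
  also have "\<dots> = sc A * (DFT - sc (1/a) * DT) + sc B * (DF - sc (1/a) * D0)"
    unfolding q sc_minus sc_mult by (simp add: algebra_simps)
  finally show ?thesis using C0 by simp
qed
end



lemma swp_app: "swp a c \<kappa> d = (if d = c then \<kappa> a else if d = a then \<kappa> c else \<kappa> d)"
  by (simp add: swp_def)

definition inV :: "nat \<Rightarrow> nat \<Rightarrow> (bool \<times> nat \<Rightarrow> nat) \<Rightarrow> bool" where
  "inV m h \<kappa> \<longleftrightarrow> (\<forall>p\<in>{1..m}. \<forall>b. \<kappa> (b, p) \<in> {1..h})"

definition eqV :: "nat \<Rightarrow> nat \<Rightarrow> 'a dten \<Rightarrow> 'a dten \<Rightarrow> bool" where
  "eqV m h T T' \<longleftrightarrow> (\<forall>\<kappa>. inV m h \<kappa> \<longrightarrow> T \<kappa> = T' \<kappa>)"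

lemma inV_swp: "inV m h \<kappa> \<Longrightarrow> p \<in> {1..m} \<Longrightarrow> q \<in> {1..m} \<Longrightarrow> inV m h (swp (b1, p) (b2, q) \<kappa>)"
  unfolding inV_def by (auto simp: swp_app)

lemma inV_upd: "inV m h \<kappa> \<Longrightarrow> x \<in> {1..h} \<Longrightarrow> inV m h (\<kappa>(a := x))"
  unfolding inV_def by auto

definition wvv :: "complex \<Rightarrow> complex \<Rightarrow> complex \<Rightarrow> complex" where
  "wvv \<rho> x y = (- x - \<rho>) - y"
definition gvv :: "nat \<Rightarrow> nat \<Rightarrow> complex \<Rightarrow> complex \<Rightarrow> complex \<Rightarrow> complex" where
  "gvv n N \<rho> x y = 1 / (fminus (- x - \<rho>) y ^ (if hatn n N = n then 1 else 0))"

definition Rop :: "(complex \<Rightarrow> 'a::ring_1) \<Rightarrow> nat \<Rightarrow> nat \<Rightarrow> complex \<Rightarrow> complex \<Rightarrow> complex \<Rightarrow> bool \<times> nat \<Rightarrow> bool \<times> nat \<Rightarrow> 'a dten \<Rightarrow> 'a dten" where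
  "Rop sc n N \<rho> x y a c = Lop sc (gvv n N \<rho> x y) (- gvv n N \<rho> x y / wvv \<rho> x y) a c"

lemma wvv_sym: "wvv \<rho> x y = wvv \<rho> y x" by (simp add: wvv_def)
lemma gvv_sym: "gvv n N \<rho> x y = gvv n N \<rho> y x"
proof -
  have e: "(- x - \<rho>) - y = (-y - \<rho>) - x" by simp
  have "fminus (- x - \<rho>) y = fminus (- y - \<rho>) x" unfolding fminus_def e ..
  thus ?thesis by (simp add: gvv_def)
qed

lemma if_div_aux: "(((if P then 1 else 0) - (if Q then 1 else 0) / w) / F :: complex)
   = (if P then 1/F else 0) + (if Q then - (1/F) / w else 0)"
  by (cases P; cases Q) (simp_all add: diff_divide_distrib)

lemma Rfac_if: "Rfac n N \<rho> ui uj x x' y y' = (if x = x' \<and> y = y' then gvv n N \<rho> ui uj else 0)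
   + (if x' = y \<and> y' = x then - gvv n N \<rho> ui uj / wvv \<rho> ui uj else 0)"
  unfolding Rfac_def Rmat_def Idmat4_def Pmat_def gvv_def wvv_def if_div_aux ..
lemma Rop_sym: "Rop sc n N \<rho> x y = Rop sc n N \<rho> y x"
  unfolding Rop_def using wvv_sym gvv_sym by metis

definition stp :: "(complex \<Rightarrow> 'a::ring_1) \<Rightarrow> (nat \<Rightarrow> nat \<Rightarrow> complex \<Rightarrow> 'a) \<Rightarrow> nat \<Rightarrow> nat \<Rightarrow> complex \<Rightarrow> nat \<Rightarrow> (nat \<Rightarrow> complex) \<Rightarrow> 'a dten \<Rightarrow> nat \<Rightarrow> 'a dten" where
  "stp sc s n N \<rho> m u T i = foldl (\<lambda>T' j. Rop sc n N \<rho> (u i) (u j) (False, i) (True, j) T') (bmul n N s T (u i) i) [Suc i..<Suc m]"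

definition cr :: "(complex \<Rightarrow> 'a::ring_1) \<Rightarrow> (nat \<Rightarrow> nat \<Rightarrow> complex \<Rightarrow> 'a) \<Rightarrow> nat \<Rightarrow> nat \<Rightarrow> complex \<Rightarrow> nat \<Rightarrow> (nat \<Rightarrow> complex) \<Rightarrow> 'a dten" where
  "cr sc s n N \<rho> m u = foldl (stp sc s n N \<rho> m u) (\<lambda>\<kappa>. 1) (rev [1..<Suc m])"

context csc begin

lemma ract_lin:
  assumes ac: "a \<noteq> c" and ka: "\<kappa> a \<in> {1..k}" and kc: "\<kappa> c \<in> {1..k}"
    and M: "\<And>x y. x \<in> {1..k} \<Longrightarrow> y \<in> {1..k} \<Longrightarrow>
       M x (\<kappa> a) y (\<kappa> c) = (if x = \<kappa> a \<and> y = \<kappa> c then al else 0) + (if \<kappa> a = y \<and> \<kappa> c = x then be else 0)"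
  shows "ract sc k M a c T \<kappa> = Lop sc al be a c T \<kappa>"
proof -
  have "ract sc k M a c T \<kappa> = (\<Sum>x\<in>{1..k}. \<Sum>y\<in>{1..k}.
      (if x = \<kappa> a then (if y = \<kappa> c then sc al * T (\<kappa>(a := x, c := y)) else 0) else 0)
    + (if x = \<kappa> c then (if y = \<kappa> a then sc be * T (\<kappa>(a := x, c := y)) else 0) else 0))"
    unfolding ract_def
    by (intro sum.cong refl) (auto simp: M sc_add sc_zero distrib_right)
  also have "\<dots> = sc al * T (\<kappa>(a := \<kappa> a, c := \<kappa> c)) + sc be * T (\<kappa>(a := \<kappa> c, c := \<kappa> a))"
    using ka kc by (simp add: sum.distrib sum_if0 sum.delta cong: if_cong)
  also have "\<dots> = Lop sc al be a c T \<kappa>"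
    unfolding Lop_def swp_def using ac by simp
  finally show ?thesis .
qed

lemma ract_Rfac:
  assumes "a \<noteq> c" "\<kappa> a \<in> {1..k}" "\<kappa> c \<in> {1..k}"
  shows "ract sc k (Rfac n N \<rho> x y) a c T \<kappa> = Rop sc n N \<rho> x y a c T \<kappa>"
  unfolding Rop_def
  apply (rule ract_lin[OF assms]) unfolding Rfac_if by (auto simp: sc_zero)

lemma ract_Rcheck:
  assumes "a \<noteq> c" "\<kappa> a \<in> {1..k}" "\<kappa> c \<in> {1..k}" and w0: "w \<noteq> 0"
  shows "ract sc k (Rcheck k w) a c T \<kappa> = Lop sc (-1/(w-1)) (w/(w-1)) a c T \<kappa>"
proof (rule ract_lin[OF assms(1-3)])
  fix x y assume xy: "x \<in> {1..k}" "y \<in> {1..k}"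
  have "mprod4 k Pmat (Rmat w) x (\<kappa> a) y (\<kappa> c) = Rmat w y (\<kappa> a) x (\<kappa> c)"
    unfolding mprod4_def Pmat_def using xy by (simp add: if0_mult if_conj0 sum_if0 sum.delta cong: if_cong)
  then have e0: "Rcheck k w x (\<kappa> a) y (\<kappa> c) = w/(w-1) * ((if y = \<kappa> a \<and> x = \<kappa> c then 1 else 0) - (if \<kappa> a = x \<and> \<kappa> c = y then 1 else 0)/w)"
    unfolding Rcheck_def by (simp add: Rmat_def Idmat4_def Pmat_def)
  have aux: "\<And>P Q. w/(w-1) * ((if Q then 1 else 0) - (if P then 1 else 0)/w)
       = (if P then -1/(w-1) else 0) + (if Q then w/(w-1) else 0)"
    subgoal for P Q using w0 by (cases P; cases Q) (simp_all add: field_simps)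
    done
  have e1: "(y = \<kappa> a \<and> x = \<kappa> c) = (\<kappa> a = y \<and> \<kappa> c = x)" by auto
  have e2: "(\<kappa> a = x \<and> \<kappa> c = y) = (x = \<kappa> a \<and> y = \<kappa> c)" by auto
  show "Rcheck k w x (\<kappa> a) y (\<kappa> c) = (if x = \<kappa> a \<and> y = \<kappa> c then -1/(w-1) else 0) + (if \<kappa> a = y \<and> \<kappa> c = x then w/(w-1) else 0)"
    unfolding e0 e1 e2 aux ..
qed


lemma eqV_Rop_ract:
  assumes "p \<in> {1..m}" "j \<in> {1..m}" "eqV m h T T'"
  shows "eqV m h (ract sc h (Rfac n N \<rho> x y) (False, p) (True, j) T) (Rop sc n N \<rho> x y (False, p) (True, j) T')"
  unfolding eqV_def
proof (intro allI impI)
  fix \<kappa> assume k: "inV m h \<kappa>"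
  have "ract sc h (Rfac n N \<rho> x y) (False, p) (True, j) T \<kappa> = Rop sc n N \<rho> x y (False, p) (True, j) T \<kappa>"
    by (rule ract_Rfac) (use k assms in \<open>auto simp: inV_def\<close>)
  also have "\<dots> = Rop sc n N \<rho> x y (False, p) (True, j) T' \<kappa>"
    using assms k inV_swp[OF k] unfolding Rop_def Lop_def eqV_def by auto
  finally show "ract sc h (Rfac n N \<rho> x y) (False, p) (True, j) T \<kappa> = Rop sc n N \<rho> x y (False, p) (True, j) T' \<kappa>" .
qed

lemma eqV_Rcheck_ract:
  assumes "p \<in> {1..m}" "q \<in> {1..m}" "p \<noteq> q" "w \<noteq> 0" "eqV m h T T'"
  shows "eqV m h (ract sc h (Rcheck h w) (b, p) (b, q) T) (Lop sc (-1/(w-1)) (w/(w-1)) (b, p) (b, q) T')"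
  unfolding eqV_def
proof (intro allI impI)
  fix \<kappa> assume k: "inV m h \<kappa>"
  have "ract sc h (Rcheck h w) (b, p) (b, q) T \<kappa> = Lop sc (-1/(w-1)) (w/(w-1)) (b, p) (b, q) T \<kappa>"
    by (rule ract_Rcheck) (use k assms in \<open>auto simp: inV_def\<close>)
  also have "\<dots> = Lop sc (-1/(w-1)) (w/(w-1)) (b, p) (b, q) T' \<kappa>"
    using assms k inV_swp[OF k] unfolding Lop_def eqV_def by auto
  finally show "ract sc h (Rcheck h w) (b, p) (b, q) T \<kappa> = Lop sc (-1/(w-1)) (w/(w-1)) (b, p) (b, q) T' \<kappa>" .
qed

lemma eqV_Lop:
  assumes "p \<in> {1..m}" "q \<in> {1..m}" "eqV m h T T'"
  shows "eqV m h (Lop sc al be (b1, p) (b2, q) T) (Lop sc al be (b1, p) (b2, q) T')"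
  using assms inV_swp unfolding Lop_def eqV_def by auto

lemma eqV_bmul: "eqV m h T T' \<Longrightarrow> eqV m h (bmul n N s T w p) (bmul n N s T' w p)"
  unfolding eqV_def bmul_def by auto

lemma eqV_refl: "eqV m h T T" by (simp add: eqV_def)
lemma eqV_trans: "eqV m h T1 T2 \<Longrightarrow> eqV m h T2 T3 \<Longrightarrow> eqV m h T1 T3" by (simp add: eqV_def)
lemma eqV_sym: "eqV m h T1 T2 \<Longrightarrow> eqV m h T2 T1" by (simp add: eqV_def)

lemma bmul_Lop: "(False, p) \<noteq> a \<Longrightarrow> (False, p) \<noteq> c \<Longrightarrow> (True, p) \<noteq> a \<Longrightarrow> (True, p) \<noteq> c \<Longrightarrow>
  bmul n N s (Lop sc al be a c T) w p = Lop sc al be a c (bmul n N s T w p)"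
  unfolding bmul_def Lop_def by (rule ext) (simp add: swp_app distrib_right mult.assoc)

end

lemma foldl_rel:
  assumes "\<And>j T T'. j \<in> set L \<Longrightarrow> R T T' \<Longrightarrow> R (f T j) (f' T' j)" "R T T'"
  shows "R (foldl f T L) (foldl f' T' L)"
  using assms by (induction L arbitrary: T T') auto

lemma foldl_comm:
  assumes "\<And>j T. j \<in> set L \<Longrightarrow> g j (Q T) = Q (g' j T)"
  shows "foldl (\<lambda>T j. g j T) (Q T) L = Q (foldl (\<lambda>T j. g' j T) T L)"
  using assms by (induction L arbitrary: T) auto

lemma foldl_interleave:
  assumes "distinct L" "\<And>j j' T. j \<in> set L \<Longrightarrow> j' \<in> set L \<Longrightarrow> j \<noteq> j' \<Longrightarrow> A j (B j' T) = B j' (A j T)"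
  shows "foldl (\<lambda>T j. A j T) (foldl (\<lambda>T j. B j T) T L) L = foldl (\<lambda>T j. A j (B j T)) T L"
  using assms
proof (induction L arbitrary: T)
  case Nil then show ?case by simp
next
  case (Cons x L)
  have c: "A x (foldl (\<lambda>T j. B j T) T0 L) = foldl (\<lambda>T j. B j T) (A x T0) L" for T0
    using foldl_comm[of L B "A x" B T0] Cons.prems by (metis distinct.simps(2) list.set_intros(1,2))
  have "foldl (\<lambda>T j. A j T) (foldl (\<lambda>T j. B j T) T (x # L)) (x # L)
      = foldl (\<lambda>T j. A j T) (foldl (\<lambda>T j. B j T) (A x (B x T)) L) L"
    by (simp add: c)
  also have "\<dots> = foldl (\<lambda>T j. A j (B j T)) (A x (B x T)) L"
    using Cons by auto
  finally show ?case by simp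
qed

definition indep :: "(bool \<times> nat) set \<Rightarrow> 'a dten \<Rightarrow> bool" where
  "indep S T \<longleftrightarrow> (\<forall>\<kappa> z v. z \<in> S \<longrightarrow> T (\<kappa>(z := v)) = T \<kappa>)"

lemma indep_const: "indep S (\<lambda>\<kappa>. c)" by (simp add: indep_def)
lemma indep_bmul: "indep S T \<Longrightarrow> (False, p) \<notin> S \<Longrightarrow> (True, p) \<notin> S \<Longrightarrow> indep S (bmul n N s T w p)"
  unfolding indep_def bmul_def by auto
lemma indep_Lop: "indep S T \<Longrightarrow> a \<notin> S \<Longrightarrow> c \<notin> S \<Longrightarrow> indep S (Lop sc al be a c T)"
proof -
  assume h: "indep S T" "a \<notin> S" "c \<notin> S"
  have e: "z \<in> S \<Longrightarrow> swp a c (\<kappa>(z := v)) = (swp a c \<kappa>)(z := v)" for \<kappa> z v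
    using h by (auto simp: swp_def fun_eq_iff)
  show ?thesis using h unfolding indep_def Lop_def by (simp add: e)
qed
lemma indep_swp: "indep S T \<Longrightarrow> a \<in> S \<Longrightarrow> c \<in> S \<Longrightarrow> T (swp a c \<kappa>) = T \<kappa>"
proof -
  assume h: "indep S T" "a \<in> S" "c \<in> S"
  have "T ((\<kappa>(a := \<kappa> c))(c := \<kappa> a)) = T (\<kappa>(a := \<kappa> c))" using h unfolding indep_def by blast
  also have "\<dots> = T \<kappa>" using h unfolding indep_def by blast
  finally show ?thesis by (simp add: swp_def)
qed

definition QQ :: "(complex \<Rightarrow> 'a::ring_1) \<Rightarrow> (nat \<Rightarrow> complex) \<Rightarrow> nat \<Rightarrow> 'a dten \<Rightarrow> 'a dten" where
  "QQ sc u i T = Lop sc (-1/((u (Suc i) - u i)-1)) ((u (Suc i) - u i)/((u (Suc i) - u i)-1)) (True, Suc i) (True, i)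
      (Lop sc (-1/((u i - u (Suc i))-1)) ((u i - u (Suc i))/((u i - u (Suc i))-1)) (False, Suc i) (False, i) T)"

context csc begin

lemma QQ_swap: "QQ sc u i T = Lop sc (-1/((u i - u (Suc i))-1)) ((u i - u (Suc i))/((u i - u (Suc i))-1)) (False, Suc i) (False, i)
    (Lop sc (-1/((u (Suc i) - u i)-1)) ((u (Suc i) - u i)/((u (Suc i) - u i)-1)) (True, Suc i) (True, i) T)"
  unfolding QQ_def by (rule Lop_comm) auto

lemma bmul_QQ: "k \<noteq> i \<Longrightarrow> k \<noteq> Suc i \<Longrightarrow> bmul n N s (QQ sc u i T) w k = QQ sc u i (bmul n N s T w k)"
  unfolding QQ_def by (simp add: bmul_Lop)

lemma Rop_QQ: "(b, p) \<notin> {(True, i), (True, Suc i), (False, i), (False, Suc i)} \<Longrightarrow>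
    (b', q) \<notin> {(True, i), (True, Suc i), (False, i), (False, Suc i)} \<Longrightarrow> (b, p) \<noteq> (b', q) \<Longrightarrow>
   Rop sc n N \<rho> x y (b, p) (b', q) (QQ sc u i T) = QQ sc u i (Rop sc n N \<rho> x y (b, p) (b', q) T)"
  unfolding QQ_def Rop_def
  apply (subst Lop_comm[where a="(b,p)" and c="(b',q)" and a'="(True, Suc i)" and c'="(True,i)"]) apply auto[4]
  apply (subst Lop_comm[where a="(b,p)" and c="(b',q)" and a'="(False, Suc i)" and c'="(False,i)"]) apply auto[4]
  apply (rule refl)
  done

lemma stepC:
  assumes k: "1 \<le> k" "k < i" and im: "Suc i \<le> m"
    and w1: "wvv \<rho> (u k) (u (Suc i)) \<noteq> 0" and w2: "wvv \<rho> (u k) (u i) \<noteq> 0" and r1: "u (Suc i) - u i \<noteq> 1"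
  shows "stp sc s n N \<rho> m u (QQ sc u i T) k = QQ sc u i (stp sc s n N \<rho> m (u(i := u (Suc i), Suc i := u i)) T k)"
proof -
  let ?u' = "u(i := u (Suc i), Suc i := u i)"
  have L: "[Suc k..<Suc m] = [Suc k..<i] @ [i, Suc i] @ [Suc (Suc i)..<Suc m]"
  proof -
    have "[Suc k..<Suc m] = [Suc k..<i] @ [i..<Suc m]" using upt_add_eq_append[of "Suc k" i "Suc m - i"] k im by simp
    also have "[i..<Suc m] = i # Suc i # [Suc (Suc i)..<Suc m]" using im by (simp add: upt_conv_Cons)
    finally show ?thesis by simp
  qed
  have u'k: "?u' k = u k" using k by simp
  have pre: "foldl (\<lambda>T' j. Rop sc n N \<rho> (u k) (u j) (False, k) (True, j) T') (QQ sc u i T0) [Suc k..<i]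
     = QQ sc u i (foldl (\<lambda>T' j. Rop sc n N \<rho> (?u' k) (?u' j) (False, k) (True, j) T') T0 [Suc k..<i])" for T0
    by (rule foldl_comm[where Q="QQ sc u i"]) (use k in \<open>auto intro!: Rop_QQ\<close>)
  have post: "foldl (\<lambda>T' j. Rop sc n N \<rho> (u k) (u j) (False, k) (True, j) T') (QQ sc u i T0) [Suc (Suc i)..<Suc m]
     = QQ sc u i (foldl (\<lambda>T' j. Rop sc n N \<rho> (?u' k) (?u' j) (False, k) (True, j) T') T0 [Suc (Suc i)..<Suc m])" for T0
    by (rule foldl_comm[where Q="QQ sc u i"]) (use k in \<open>auto intro!: Rop_QQ\<close>)
  have mid: "Rop sc n N \<rho> (u k) (u (Suc i)) (False, k) (True, Suc i) (Rop sc n N \<rho> (u k) (u i) (False, k) (True, i) (QQ sc u i T0))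
     = QQ sc u i (Rop sc n N \<rho> (u k) (u i) (False, k) (True, Suc i) (Rop sc n N \<rho> (u k) (u (Suc i)) (False, k) (True, i) T0))" for T0
  proof -
    let ?LF = "Lop sc (-1/((u i - u (Suc i))-1)) ((u i - u (Suc i))/((u i - u (Suc i))-1)) (False, Suc i) (False, i)"
    let ?LT = "Lop sc (-1/((u (Suc i) - u i)-1)) ((u (Suc i) - u i)/((u (Suc i) - u i)-1)) (True, i) (True, Suc i)"
    have c1: "Rop sc n N \<rho> x y (False, k) (True, j) (?LF X) = ?LF (Rop sc n N \<rho> x y (False, k) (True, j) X)" for x y j X
      unfolding Rop_def using k by (intro Lop_comm) auto
    have y: "Rop sc n N \<rho> (u k) (u (Suc i)) (False, k) (True, Suc i) (Rop sc n N \<rho> (u k) (u i) (False, k) (True, i) (?LT X))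
      = ?LT (Rop sc n N \<rho> (u k) (u i) (False, k) (True, Suc i) (Rop sc n N \<rho> (u k) (u (Suc i)) (False, k) (True, i) X))" for X
      unfolding Rop_def
      by (rule ybe2) (use w1 w2 r1 k in \<open>auto simp: wvv_def\<close>)
    show ?thesis unfolding QQ_swap Lop_sym[of _ _ _ "(True, Suc i)" "(True, i)"] c1 y ..
  qed
  have u'i: "?u' i = u (Suc i)" "?u' (Suc i) = u i" by simp_all
  have "stp sc s n N \<rho> m u (QQ sc u i T) k =
     foldl (\<lambda>T' j. Rop sc n N \<rho> (u k) (u j) (False, k) (True, j) T')
      (foldl (\<lambda>T' j. Rop sc n N \<rho> (u k) (u j) (False, k) (True, j) T')
       (foldl (\<lambda>T' j. Rop sc n N \<rho> (u k) (u j) (False, k) (True, j) T') (QQ sc u i (bmul n N s T (u k) k)) [Suc k..<i])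
         [i, Suc i]) [Suc (Suc i)..<Suc m]"
    unfolding stp_def L foldl_append using k by (simp add: bmul_QQ)
  also have "\<dots> = QQ sc u i (stp sc s n N \<rho> m ?u' T k)"
    unfolding pre
    unfolding stp_def L foldl_append u'k
    by (simp only: foldl_Cons foldl_Nil mid post u'i u'k)
  finally show ?thesis .
qed


lemma stepB1:
  assumes im: "Suc i \<le> m"
  shows "stp sc s n N \<rho> m v (stp sc s n N \<rho> m v X (Suc i)) i =
    foldl (\<lambda>T j. Rop sc n N \<rho> (v i) (v j) (False, i) (True, j) (Rop sc n N \<rho> (v (Suc i)) (v j) (False, Suc i) (True, j) T))
      (Rop sc n N \<rho> (v i) (v (Suc i)) (False, i) (True, Suc i) (bmul n N s (bmul n N s X (v (Suc i)) (Suc i)) (v i) i))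
      [Suc (Suc i)..<Suc m]"
proof -
  let ?L = "[Suc (Suc i)..<Suc m]"
  let ?A = "\<lambda>j T. Rop sc n N \<rho> (v i) (v j) (False, i) (True, j) T"
  let ?B = "\<lambda>j T. Rop sc n N \<rho> (v (Suc i)) (v j) (False, Suc i) (True, j) T"
  have L: "[Suc i..<Suc m] = Suc i # ?L" using im by (simp add: upt_conv_Cons)
  have c1: "bmul n N s (foldl (\<lambda>T j. ?B j T) Z ?L) (v i) i = foldl (\<lambda>T j. ?B j T) (bmul n N s Z (v i) i) ?L" for Z
    by (rule foldl_comm[where Q="\<lambda>T. bmul n N s T (v i) i", symmetric]) (auto simp: Rop_def bmul_Lop)
  have c2: "Rop sc n N \<rho> (v i) (v (Suc i)) (False, i) (True, Suc i) (foldl (\<lambda>T j. ?B j T) Z ?L)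
     = foldl (\<lambda>T j. ?B j T) (Rop sc n N \<rho> (v i) (v (Suc i)) (False, i) (True, Suc i) Z) ?L" for Z
    by (rule foldl_comm[where Q="Rop sc n N \<rho> (v i) (v (Suc i)) (False, i) (True, Suc i)", symmetric])
       (auto simp: Rop_def intro!: Lop_comm)
  have "stp sc s n N \<rho> m v (stp sc s n N \<rho> m v X (Suc i)) i =
     foldl (\<lambda>T j. ?A j T) (foldl (\<lambda>T j. ?B j T)
      (Rop sc n N \<rho> (v i) (v (Suc i)) (False, i) (True, Suc i) (bmul n N s (bmul n N s X (v (Suc i)) (Suc i)) (v i) i)) ?L) ?L"
    unfolding stp_def L by (simp only: foldl_Cons c1 c2)
  also have "\<dots> = foldl (\<lambda>T j. ?A j (?B j T))
      (Rop sc n N \<rho> (v i) (v (Suc i)) (False, i) (True, Suc i) (bmul n N s (bmul n N s X (v (Suc i)) (Suc i)) (v i) i)) ?L"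
    by (rule foldl_interleave) (auto simp: Rop_def intro!: Lop_comm)
  finally show ?thesis .
qed

lemma stepB2:
  assumes j: "Suc (Suc i) \<le> j"
    and w1: "wvv \<rho> (u (Suc i)) (u j) \<noteq> 0" and w2: "wvv \<rho> (u i) (u j) \<noteq> 0" and r1: "u i - u (Suc i) \<noteq> 1"
  shows "Rop sc n N \<rho> (u i) (u j) (False, i) (True, j) (Rop sc n N \<rho> (u (Suc i)) (u j) (False, Suc i) (True, j) (QQ sc u i T))
    = QQ sc u i (Rop sc n N \<rho> (u (Suc i)) (u j) (False, i) (True, j) (Rop sc n N \<rho> (u i) (u j) (False, Suc i) (True, j) T))"
proof -
  let ?LF = "Lop sc (-1/((u i - u (Suc i))-1)) ((u i - u (Suc i))/((u i - u (Suc i))-1)) (False, i) (False, Suc i)"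
  let ?LT = "Lop sc (-1/((u (Suc i) - u i)-1)) ((u (Suc i) - u i)/((u (Suc i) - u i)-1)) (True, Suc i) (True, i)"
  have c1: "Rop sc n N \<rho> x y (False, p) (True, j) (?LT X) = ?LT (Rop sc n N \<rho> x y (False, p) (True, j) X)" for x y p X
    unfolding Rop_def using j by (intro Lop_comm) auto
  have y: "?LF (Rop sc n N \<rho> (u (Suc i)) (u j) (False, i) (True, j) (Rop sc n N \<rho> (u i) (u j) (False, Suc i) (True, j) X))
     = Rop sc n N \<rho> (u i) (u j) (False, i) (True, j) (Rop sc n N \<rho> (u (Suc i)) (u j) (False, Suc i) (True, j) (?LF X))" for X
    unfolding Rop_def
    by (rule ybe1) (use w1 w2 r1 j in \<open>auto simp: wvv_def\<close>)
  show ?thesis unfolding QQ_def Lop_sym[of _ _ _ "(False, Suc i)" "(False, i)"] c1 y ..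
qed

lemma core:
  assumes rel: "ty_rel1 sc s n N orth \<rho> (u i) (u (Suc i))" and th: "orth \<or> hatn n N = n"
    and im: "Suc i \<le> m" and i1: "1 \<le> i"
    and ind: "indep {(False, i), (True, i), (False, Suc i), (True, Suc i)} X"
    and a: "u i - u (Suc i) \<noteq> 0" "u i - u (Suc i) \<noteq> 1" "u i - u (Suc i) \<noteq> -1"
  shows "eqV m (hatn n N) (Rop sc n N \<rho> (u i) (u (Suc i)) (False, i) (True, Suc i) (bmul n N s (bmul n N s X (u (Suc i)) (Suc i)) (u i) i))
   (QQ sc u i (Rop sc n N \<rho> (u (Suc i)) (u i) (False, i) (True, Suc i) (bmul n N s (bmul n N s X (u i) (Suc i)) (u (Suc i)) i)))"
proof -
  let ?h = "hatn n N"
  define C where "C = Rop sc n N \<rho> (u i) (u (Suc i)) (False, i) (True, Suc i) (bmul n N s (bmul n N s X (u (Suc i)) (Suc i)) (u i) i)"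
  define D where "D = Rop sc n N \<rho> (u (Suc i)) (u i) (False, i) (True, Suc i) (bmul n N s (bmul n N s X (u i) (Suc i)) (u (Suc i)) i)"
  define sT where "sT = swp (True, Suc i) (True, i)"
  define sF where "sF = swp (False, Suc i) (False, i)"
  define aa where "aa = u i - u (Suc i)"
  define g where "g = gvv n N \<rho> (u i) (u (Suc i))"
  define c where "c = wvv \<rho> (u i) (u (Suc i))"
  have Xs: "X (swp p q \<kappa>) = X \<kappa>" if "p \<in> {(False, i), (True, i), (False, Suc i), (True, Suc i)}"
      "q \<in> {(False, i), (True, i), (False, Suc i), (True, Suc i)}" for p q \<kappa>
    by (rule indep_swp[OF ind that])
  have gD: "gvv n N \<rho> (u (Suc i)) (u i) = g" "wvv \<rho> (u (Suc i)) (u i) = c" unfolding g_def c_def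
    by (simp_all add: gvv_sym wvv_sym)
  have cc: "(- u (Suc i) - \<rho>) - u i = c" unfolding c_def wvv_def by simp
  have E1: "C \<kappa> - sc (1/aa) * C (sT \<kappa>) = D (sF (sT \<kappa>)) - sc (1/aa) * D (sT \<kappa>)" if k: "inV m ?h \<kappa>" for \<kappa>
  proof -
    have kr: "\<kappa> (False, i) \<in> {1..?h}" "\<kappa> (True, i) \<in> {1..?h}" "\<kappa> (False, Suc i) \<in> {1..?h}" "\<kappa> (True, Suc i) \<in> {1..?h}"
      using k im i1 unfolding inV_def by auto
    note BB = BB_b[OF rel th kr(1) kr(2) kr(3) kr(4), unfolded cc aa_def[symmetric]]
    have e1: "C \<kappa> = sc g * (X \<kappa> * bb n N s (u (Suc i)) (\<kappa> (False, Suc i)) (\<kappa> (True, Suc i)) * bb n N s (u i) (\<kappa> (False, i)) (\<kappa> (True, i)))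
       + sc (-g/c) * (X \<kappa> * bb n N s (u (Suc i)) (\<kappa> (False, Suc i)) (\<kappa> (False, i)) * bb n N s (u i) (\<kappa> (True, Suc i)) (\<kappa> (True, i)))"
      unfolding C_def Rop_def Lop_def bmul_bb g_def[symmetric] c_def[symmetric] by (simp add: swp_app Xs)
    have e2: "C (sT \<kappa>) = sc g * (X \<kappa> * bb n N s (u (Suc i)) (\<kappa> (False, Suc i)) (\<kappa> (True, i)) * bb n N s (u i) (\<kappa> (False, i)) (\<kappa> (True, Suc i)))
       + sc (-g/c) * (X \<kappa> * bb n N s (u (Suc i)) (\<kappa> (False, Suc i)) (\<kappa> (False, i)) * bb n N s (u i) (\<kappa> (True, i)) (\<kappa> (True, Suc i)))"
      unfolding C_def Rop_def Lop_def bmul_bb g_def[symmetric] c_def[symmetric] sT_def by (simp add: swp_app Xs)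
    have e3: "D (sF (sT \<kappa>)) = sc g * (X \<kappa> * bb n N s (u i) (\<kappa> (False, i)) (\<kappa> (True, i)) * bb n N s (u (Suc i)) (\<kappa> (False, Suc i)) (\<kappa> (True, Suc i)))
       + sc (-g/c) * (X \<kappa> * bb n N s (u i) (\<kappa> (False, i)) (\<kappa> (False, Suc i)) * bb n N s (u (Suc i)) (\<kappa> (True, i)) (\<kappa> (True, Suc i)))"
      unfolding D_def Rop_def Lop_def bmul_bb gD sT_def sF_def by (simp add: swp_app Xs)
    have e4: "D (sT \<kappa>) = sc g * (X \<kappa> * bb n N s (u i) (\<kappa> (False, Suc i)) (\<kappa> (True, i)) * bb n N s (u (Suc i)) (\<kappa> (False, i)) (\<kappa> (True, Suc i)))
       + sc (-g/c) * (X \<kappa> * bb n N s (u i) (\<kappa> (False, Suc i)) (\<kappa> (False, i)) * bb n N s (u (Suc i)) (\<kappa> (True, i)) (\<kappa> (True, Suc i)))"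
      unfolding D_def Rop_def Lop_def bmul_bb gD sT_def by (simp add: swp_app Xs)
    show ?thesis unfolding e1 e2 e3 e4 by (rule E1_alg[OF BB])
  qed
  show ?thesis unfolding eqV_def C_def[symmetric] D_def[symmetric]
  proof (intro allI impI)
    fix \<kappa> assume k: "inV m ?h \<kappa>"
    have kT: "inV m ?h (sT \<kappa>)" unfolding sT_def by (rule inV_swp[OF k]) (use im i1 in auto)
    have E2: "C (sT \<kappa>) - sc (1/aa) * C \<kappa> = D (sF \<kappa>) - sc (1/aa) * D \<kappa>"
      using E1[OF kT] unfolding sT_def by simp
    have r: "u (Suc i) - u i = - aa" unfolding aa_def by simp
    have "C \<kappa> = sc (-1/(-aa-1)) * (sc (-1/(aa-1)) * D \<kappa> + sc (aa/(aa-1)) * D (sF \<kappa>))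
            + sc (-aa/(-aa-1)) * (sc (-1/(aa-1)) * D (sT \<kappa>) + sc (aa/(aa-1)) * D (sF (sT \<kappa>)))"
      by (rule fin_alg) (use a E1[OF k] E2 in \<open>simp_all add: aa_def\<close>)
    also have "\<dots> = QQ sc u i D \<kappa>"
      unfolding QQ_def Lop_def r aa_def[symmetric] sT_def sF_def by simp
    finally show "C \<kappa> = QQ sc u i D \<kappa>" .
  qed
qed

lemma stp_eqV: "k \<in> {1..m} \<Longrightarrow> eqV m (hatn n N) T T' \<Longrightarrow> eqV m (hatn n N) (stp sc s n N \<rho> m u T k) (stp sc s n N \<rho> m u T' k)"
  unfolding stp_def
  by (rule foldl_rel[where R="eqV m (hatn n N)"]) (auto simp: Rop_def intro!: eqV_Lop eqV_bmul)

lemma AB_eqV: "i \<in> {1..m} \<Longrightarrow> Suc i \<in> {1..m} \<Longrightarrow> set L \<subseteq> {1..m} \<Longrightarrow> eqV m (hatn n N) T T' \<Longrightarrow>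
  eqV m (hatn n N) (foldl (\<lambda>T j. Rop sc n N \<rho> x (u j) (False, i) (True, j) (Rop sc n N \<rho> y (u j) (False, Suc i) (True, j) T)) T L)
   (foldl (\<lambda>T j. Rop sc n N \<rho> x (u j) (False, i) (True, j) (Rop sc n N \<rho> y (u j) (False, Suc i) (True, j) T)) T' L)"
  by (rule foldl_rel[where R="eqV m (hatn n N)"]) (auto simp: Rop_def intro!: eqV_Lop)

lemma creation_cr: "eqV m (hatn n N) (creation sc s n N \<rho> m u) (cr sc s n N \<rho> m u)"
  unfolding creation_def cr_def stp_def
proof (rule foldl_rel[where R="eqV m (hatn n N)"])
  fix j and T T' :: "'a dten" assume j: "j \<in> set (rev [1..<Suc m])" and e: "eqV m (hatn n N) T T'"
  show "eqV m (hatn n N) (foldl (\<lambda>T' ja. ract sc (hatn n N) (Rfac n N \<rho> (u j) (u ja)) (False, j) (True, ja) T') (bmul n N s T (u j) j) [Suc j..<Suc m])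
          (foldl (\<lambda>T' ja. Rop sc n N \<rho> (u j) (u ja) (False, j) (True, ja) T') (bmul n N s T' (u j) j) [Suc j..<Suc m])"
    by (rule foldl_rel[where R="eqV m (hatn n N)"]) (use j e in \<open>auto intro!: eqV_Rop_ract eqV_bmul\<close>)
qed (rule eqV_refl)

lemma indep_X: "(\<forall>k\<in>set L. Suc (Suc i) \<le> k) \<Longrightarrow> indep {(False, i), (True, i), (False, Suc i), (True, Suc i)} T \<Longrightarrow>
   indep {(False, i), (True, i), (False, Suc i), (True, Suc i)} (foldl (stp sc s n N \<rho> m u) T L)"
proof (induction L arbitrary: T)
  case Nil then show ?case by simp
next
  case (Cons k L)
  have "indep {(False, i), (True, i), (False, Suc i), (True, Suc i)} (stp sc s n N \<rho> m u T k)"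
    unfolding stp_def
    by (rule foldl_rel[where R="\<lambda>T T'. indep {(False, i), (True, i), (False, Suc i), (True, Suc i)} T"])
       (use Cons.prems in \<open>auto simp: Rop_def intro!: indep_Lop indep_bmul\<close>)
  then show ?case using Cons by simp
qed

end

lemma split_list: "1 \<le> i \<Longrightarrow> i < m \<Longrightarrow> rev [1..<Suc m] = rev [Suc (Suc i)..<Suc m] @ [Suc i, i] @ rev [1..<i]"
proof -
  assume h: "1 \<le> i" "i < m"
  have "[1..<Suc m] = [1..<i] @ [i..<Suc m]" using upt_add_eq_append[of 1 i "Suc m - i"] h by simp
  also have "[i..<Suc m] = i # Suc i # [Suc (Suc i)..<Suc m]" using h by (simp add: upt_conv_Cons)
  finally show ?thesis by simp
qed

theorem mainTheorem1:
  fixes sc :: "complex \<Rightarrow> 'a::ring_1"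
    and s :: "nat \<Rightarrow> nat \<Rightarrow> complex \<Rightarrow> 'a"
    and n N m i :: nat and orth :: bool and \<rho> :: complex
  assumes "n \<ge> 1" and "N = 2 * n \<or> N = 2 * n + 1" and "\<not> orth \<longrightarrow> N = 2 * n"
    and "is_cscalar sc"
    and "tw_yangian_rep sc s n N orth \<rho>"
    and "m \<ge> 2" and "1 \<le> i" and "i < m"
  shows "\<exists>E. finite E \<and>
    (\<forall>u :: nat \<Rightarrow> complex.
       (\<forall>p\<in>{1..m}. u p \<notin> E) \<longrightarrow>
       (\<forall>p\<in>{1..m}. \<forall>q\<in>{1..m}. p \<noteq> q \<longrightarrow> u p - u q \<notin> E \<and> u p + u q \<notin> E) \<longrightarrow>
       (\<forall>\<kappa>. (\<forall>p\<in>{1..m}. \<forall>b. \<kappa> (b, p) \<in> {1..hatn n N}) \<longrightarrow>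
          creation sc s n N \<rho> m u \<kappa> =
          ract sc (hatn n N) (Rcheck (hatn n N) (u (i + 1) - u i)) (True, i + 1) (True, i)
            (ract sc (hatn n N) (Rcheck (hatn n N) (u i - u (i + 1))) (False, i + 1) (False, i)
               (creation sc s n N \<rho> m (u(i := u (i + 1), i + 1 := u i)))) \<kappa>))"

proof -
  interpret csc sc by unfold_locales (rule assms(4))
  let ?h = "hatn n N"
  obtain E0 where fE0: "finite E0" and rep: "\<And>u v. u \<notin> E0 \<Longrightarrow> v \<notin> E0 \<Longrightarrow> u - v \<notin> E0 \<Longrightarrow> u + v \<notin> E0 \<Longrightarrow>
      ty_rel1 sc s n N orth \<rho> u v \<and> ty_rel2 sc s n N orth \<rho> u"
    using assms(5) unfolding tw_yangian_rep_def by blast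
  have th: "orth \<or> hatn n N = n" using assms(2,3) by (auto simp: hatn_def)
  have im: "Suc i \<le> m" and i1: "1 \<le> i" using assms by auto
  show ?thesis
  proof (intro exI[of _ "E0 \<union> {0, 1, -1, -\<rho>, -\<rho>-1}"] conjI allI impI)
    show "finite (E0 \<union> {0, 1, -1, -\<rho>, -\<rho>-1})" using fE0 by simp
    fix u :: "nat \<Rightarrow> complex" and \<kappa> :: "bool \<times> nat \<Rightarrow> nat"
    assume hu: "\<forall>p\<in>{1..m}. u p \<notin> E0 \<union> {0, 1, -1, -\<rho>, -\<rho>-1}"
      and hd: "\<forall>p\<in>{1..m}. \<forall>q\<in>{1..m}. p \<noteq> q \<longrightarrow> u p - u q \<notin> E0 \<union> {0, 1, -1, -\<rho>, -\<rho>-1} \<and> u p + u q \<notin> E0 \<union> {0, 1, -1, -\<rho>, -\<rho>-1}"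
      and hk: "\<forall>p\<in>{1..m}. \<forall>b. \<kappa> (b, p) \<in> {1..?h}"
    define u' where "u' = u(i := u (Suc i), Suc i := u i)"
    have k: "inV m ?h \<kappa>" using hk unfolding inV_def by blast
    have ii: "i \<in> {1..m}" "Suc i \<in> {1..m}" "i \<noteq> Suc i" using im i1 by auto
    have wv: "wvv \<rho> (u p) (u q) \<noteq> 0" if "p \<in> {1..m}" "q \<in> {1..m}" "p \<noteq> q" for p q
    proof
      assume "wvv \<rho> (u p) (u q) = 0"
      hence "u p + u q = -\<rho>" unfolding wvv_def by (metis add.commute add_uminus_conv_diff diff_diff_eq eq_neg_iff_add_eq_0 minus_diff_eq neg_equal_iff_equal)
      thus False using hd that by auto
    qed
    have a: "u i - u (Suc i) \<noteq> 0" "u i - u (Suc i) \<noteq> 1" "u i - u (Suc i) \<noteq> -1"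
      using hd ii by auto
    have r: "u (Suc i) - u i \<noteq> 0" "u (Suc i) - u i \<noteq> 1" using hd ii by auto
    have rel: "ty_rel1 sc s n N orth \<rho> (u i) (u (Suc i))"
      using rep[of "u i" "u (Suc i)"] hu hd ii by auto
    define X where "X = foldl (stp sc s n N \<rho> m u) (\<lambda>\<kappa>. 1) (rev [Suc (Suc i)..<Suc m])"
    have stp_u': "stp sc s n N \<rho> m u' T k = stp sc s n N \<rho> m u T k" if "Suc (Suc i) \<le> k" for T k
      unfolding stp_def using that by (intro foldl_cong) (auto simp: u'_def)
    have X': "foldl (stp sc s n N \<rho> m u') (\<lambda>\<kappa>. 1) (rev [Suc (Suc i)..<Suc m]) = X"
      unfolding X_def by (intro foldl_cong) (auto simp: stp_u')
    have indX: "indep {(False, i), (True, i), (False, Suc i), (True, Suc i)} X"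
      unfolding X_def by (rule indep_X) (auto intro: indep_const)
    let ?L = "[Suc (Suc i)..<Suc m]"
    let ?AB = "\<lambda>T j. Rop sc n N \<rho> (u i) (u j) (False, i) (True, j) (Rop sc n N \<rho> (u (Suc i)) (u j) (False, Suc i) (True, j) T)"
    let ?AB' = "\<lambda>T j. Rop sc n N \<rho> (u (Suc i)) (u j) (False, i) (True, j) (Rop sc n N \<rho> (u i) (u j) (False, Suc i) (True, j) T)"
    define core where "core = Rop sc n N \<rho> (u i) (u (Suc i)) (False, i) (True, Suc i) (bmul n N s (bmul n N s X (u (Suc i)) (Suc i)) (u i) i)"
    define core' where "core' = Rop sc n N \<rho> (u (Suc i)) (u i) (False, i) (True, Suc i) (bmul n N s (bmul n N s X (u i) (Suc i)) (u (Suc i)) i)"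
    have Yu: "stp sc s n N \<rho> m u (stp sc s n N \<rho> m u X (Suc i)) i = foldl ?AB core ?L"
      unfolding stepB1[OF im] core_def ..
    have Yu': "stp sc s n N \<rho> m u' (stp sc s n N \<rho> m u' X (Suc i)) i = foldl ?AB' core' ?L"
      unfolding stepB1[OF im] core'_def by (intro foldl_cong) (auto simp: u'_def)
    have QY: "QQ sc u i (foldl ?AB' core' ?L) = foldl ?AB (QQ sc u i core') ?L"
    proof (rule foldl_comm[where Q="QQ sc u i", symmetric])
      fix j T assume j: "j \<in> set ?L"
      show "?AB (QQ sc u i T) j = QQ sc u i (?AB' T j)"
        by (rule stepB2) (use j ii a wv[of "Suc i" j] wv[of i j] in auto)
    qed
    have Y: "eqV m ?h (stp sc s n N \<rho> m u (stp sc s n N \<rho> m u X (Suc i)) i)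
        (QQ sc u i (stp sc s n N \<rho> m u' (stp sc s n N \<rho> m u' X (Suc i)) i))"
      unfolding Yu Yu' QY
      by (rule AB_eqV) (use ii in \<open>auto simp: core_def core'_def intro!: core[OF rel th im i1 indX a]\<close>)
    have cru: "cr sc s n N \<rho> m u = foldl (stp sc s n N \<rho> m u) (stp sc s n N \<rho> m u (stp sc s n N \<rho> m u X (Suc i)) i) (rev [1..<i])"
      unfolding cr_def split_list[OF i1 assms(8)] X_def by simp
    have cru': "cr sc s n N \<rho> m u' = foldl (stp sc s n N \<rho> m u') (stp sc s n N \<rho> m u' (stp sc s n N \<rho> m u' X (Suc i)) i) (rev [1..<i])"
      unfolding cr_def split_list[OF i1 assms(8)] X'[symmetric] by simp
    have outer: "foldl (stp sc s n N \<rho> m u) (QQ sc u i T) (rev [1..<i]) = QQ sc u i (foldl (stp sc s n N \<rho> m u') T (rev [1..<i]))" for T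
    proof -
      have "foldl (\<lambda>T k. stp sc s n N \<rho> m u T k) (QQ sc u i T) (rev [1..<i]) = QQ sc u i (foldl (\<lambda>T k. stp sc s n N \<rho> m u' T k) T (rev [1..<i]))"
      proof (rule foldl_comm[where Q="QQ sc u i"])
        fix k T assume kk: "k \<in> set (rev [1..<i])"
        show "stp sc s n N \<rho> m u (QQ sc u i T) k = QQ sc u i (stp sc s n N \<rho> m u' T k)"
          unfolding u'_def by (rule stepC) (use kk ii im r wv[of k "Suc i"] wv[of k i] in auto)
      qed
      thus ?thesis by simp
    qed
    have main: "eqV m ?h (cr sc s n N \<rho> m u) (QQ sc u i (cr sc s n N \<rho> m u'))"
      unfolding cru cru' outer[symmetric]
      by (rule foldl_rel[where R="eqV m ?h"]) (use Y im in \<open>auto intro!: stp_eqV\<close>)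
    have rhs: "eqV m ?h (ract sc ?h (Rcheck ?h (u (i + 1) - u i)) (True, i + 1) (True, i)
            (ract sc ?h (Rcheck ?h (u i - u (i + 1))) (False, i + 1) (False, i)
               (creation sc s n N \<rho> m (u(i := u (i + 1), i + 1 := u i)))))
       (QQ sc u i (cr sc s n N \<rho> m u'))"
      unfolding QQ_def u'_def Suc_eq_plus1[symmetric]
      by (intro eqV_Rcheck_ract creation_cr) (use ii a r in auto)
    show "creation sc s n N \<rho> m u \<kappa> =
          ract sc ?h (Rcheck ?h (u (i + 1) - u i)) (True, i + 1) (True, i)
            (ract sc ?h (Rcheck ?h (u i - u (i + 1))) (False, i + 1) (False, i)
               (creation sc s n N \<rho> m (u(i := u (i + 1), i + 1 := u i)))) \<kappa>"
    proof -
      have c1: "eqV m ?h (creation sc s n N \<rho> m u) (cr sc s n N \<rho> m u)" by (rule creation_cr)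
      show ?thesis using c1 main rhs k unfolding eqV_def by auto
    qed
  qed
qed

end
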